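(* Let $\mathcal{A} = (V, V_0, V_1, E, v_I)$ be an arena, $w \colon E \to -\mathbb{N} \cup \{\mathrm{R}\}$, $cap \in \mathbb{N}$ and $t \in \mathbb{N}$. If Player~$0$ wins $(\mathcal{A}, \mathsf{AvgRecharge}(w, cap, t))$, then she also wins it with a finite-state strategy implemented by a memory structure with $cap+2$ memory states.
   Context: An arena $\mathcal{A} = (V, V_0, V_1, E, v_I)$ consists of a finite directed graph $(V,E)$ in which every vertex has at least one outgoing edge, a partition $V = V_0 \uplus V_1$, and an initial vertex $v_I$. A play is an infinite path $v_0 v_1 \cdots$ with $v_0 = v_I$. A strategy for Player~$i$ is a map $\sigma \colon V^* V_i \to V$ with $(v, \sigma(xv)) \in E$; a play is consistent with $\sigma$ if $v_{n+1} = \sigma(v_0\cdots v_n)$ whenever $v_n \in V_i$. Player~$0$ wins $(\mathcal{A}, \mathrm{Win})$ (with a strategy $\sigma$) if all plays consistent with $\sigma$ lie in $\mathrm{Win}$. A memory structure $\mathcal{M} = (M, m_I, \mathrm{Upd})$ has a finite set $M$ of states, initial state $m_I$, and update $\mathrm{Upd} \colon M \times E \to M$, extended by $\mathrm{Upd}^+(v_0) = m_I$, $\mathrm{Upd}^+(v_0\cdots v_n v_{n+1}) = \mathrm{Upd}(\mathrm{Upd}^+(v_0\cdots v_n),(v_n,v_{n+1}))$. A next-move function $\mathrm{Nxt} \colon V_i \times M \to V$ with $(v,\mathrm{Nxt}(v,m)) \in E$ induces the strategy $\sigma(v_0\cdots v_n) = \mathrm{Nxt}(v_n, \mathrm{Upd}^+(v_0\cdots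 v_n))$; such a strategy is finite-state, implemented by $\mathcal{M}$, and its size is $|M|$. A recharge weight function $w \colon E \to -\mathbb{N} \cup \{\mathrm{R}\}$ labels each edge with a non-positive integer or the recharge action $\mathrm{R}$. For a finite path $x$ without $\mathrm{R}$-edges, $\mathrm{EL}(x)$ is the sum of its edge weights. $\mathrm{EL}_{cap}(v_0\cdots v_n) = cap + \mathrm{EL}(x)$ where $x$ is the longest suffix of $v_0\cdots v_n$ containing no $\mathrm{R}$-edge. $\mathsf{Recharge}(w,cap) = \{v_0 v_1 \cdots \mid \forall n.\ \mathrm{EL}_{cap}(v_0\cdots v_n) \ge 0\}$ and $\mathsf{AvgRecharge}(w,cap,t) = \{ v_0 v_1\cdots \mid \limsup_{n\to\infty} \frac1n \sum_{i=0}^{n-1}\mathrm{EL}_{cap}(v_0\cdots v_i) \le t\} \cap \mathsf{Recharge}(w,cap)$. *)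

theory Defs
  imports Main "HOL-Library.Extended_Real"
begin

text \<open>An arena (V, V0, V1, E, vI) with V1 = V - V0.\<close>
definition arena :: "'v set \<Rightarrow> 'v set \<Rightarrow> ('v \<times> 'v) set \<Rightarrow> 'v \<Rightarrow> bool" where
  "arena V V0 E vI \<longleftrightarrow> finite V \<and> V0 \<subseteq> V \<and> E \<subseteq> V \<times> V \<and> vI \<in> V \<and>
     (\<forall>v\<in>V. \<exists>v'. (v, v') \<in> E)"

definition play :: "('v \<times> 'v) set \<Rightarrow> 'v \<Rightarrow> (nat \<Rightarrow> 'v) \<Rightarrow> bool" where
  "play E vI \<rho> \<longleftrightarrow> \<rho> 0 = vI \<and> (\<forall>n. (\<rho> n, \<rho> (Suc n)) \<in> E)"

definition prefix :: "(nat \<Rightarrow> 'v) \<Rightarrow> nat \<Rightarrow> 'v list" where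
  "prefix \<rho> n = map \<rho> [0..<Suc n]"

definition strategy :: "'v set \<Rightarrow> 'v set \<Rightarrow> ('v \<times> 'v) set \<Rightarrow> ('v list \<Rightarrow> 'v) \<Rightarrow> bool" where
  "strategy V V0 E \<sigma> \<longleftrightarrow>
     (\<forall>xs. xs \<noteq> [] \<and> set xs \<subseteq> V \<and> last xs \<in> V0 \<longrightarrow> (last xs, \<sigma> xs) \<in> E)"

definition consistent :: "'v set \<Rightarrow> ('v list \<Rightarrow> 'v) \<Rightarrow> (nat \<Rightarrow> 'v) \<Rightarrow> bool" where
  "consistent V0 \<sigma> \<rho> \<longleftrightarrow> (\<forall>n. \<rho> n \<in> V0 \<longrightarrow> \<rho> (Suc n) = \<sigma> (prefix \<rho> n))"

definition wins_with ::
  "'v set \<Rightarrow> 'v set \<Rightarrow> ('v \<times> 'v) set \<Rightarrow> 'v \<Rightarrow> (nat \<Rightarrow> 'v) set \<Rightarrow> ('v list \<Rightarrow> 'v) \<Rightarrow> bool" where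
  "wins_with V V0 E vI Win \<sigma> \<longleftrightarrow> strategy V V0 E \<sigma> \<and>
     (\<forall>\<rho>. play E vI \<rho> \<and> consistent V0 \<sigma> \<rho> \<longrightarrow> \<rho> \<in> Win)"

definition wins :: "'v set \<Rightarrow> 'v set \<Rightarrow> ('v \<times> 'v) set \<Rightarrow> 'v \<Rightarrow> (nat \<Rightarrow> 'v) set \<Rightarrow> bool" where
  "wins V V0 E vI Win \<longleftrightarrow> (\<exists>\<sigma>. wins_with V V0 E vI Win \<sigma>)"

definition edges :: "'v list \<Rightarrow> ('v \<times> 'v) list" where
  "edges xs = zip xs (tl xs)"

definition memory_structure :: "('v \<times> 'v) set \<Rightarrow> 'm set \<Rightarrow> 'm \<Rightarrow> ('m \<Rightarrow> 'v \<times> 'v \<Rightarrow> 'm) \<Rightarrow> bool" where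
  "memory_structure E M mI Upd \<longleftrightarrow> finite M \<and> mI \<in> M \<and> (\<forall>m\<in>M. \<forall>e\<in>E. Upd m e \<in> M)"

definition upd_plus :: "'m \<Rightarrow> ('m \<Rightarrow> 'v \<times> 'v \<Rightarrow> 'm) \<Rightarrow> 'v list \<Rightarrow> 'm" where
  "upd_plus mI Upd xs = foldl Upd mI (edges xs)"

definition next_move :: "'v set \<Rightarrow> ('v \<times> 'v) set \<Rightarrow> 'm set \<Rightarrow> ('v \<Rightarrow> 'm \<Rightarrow> 'v) \<Rightarrow> bool" where
  "next_move V0 E M Nxt \<longleftrightarrow> (\<forall>v\<in>V0. \<forall>m\<in>M. (v, Nxt v m) \<in> E)"

definition induced_strategy :: "'m \<Rightarrow> ('m \<Rightarrow> 'v \<times> 'v \<Rightarrow> 'm) \<Rightarrow> ('v \<Rightarrow> 'm \<Rightarrow> 'v) \<Rightarrow> 'v list \<Rightarrow> 'v" where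
  "induced_strategy mI Upd Nxt xs = Nxt (last xs) (upd_plus mI Upd xs)"

text \<open>Edge labels: a non-positive integer weight, or the recharge action R.\<close>
datatype rweight = Wt int | Rch

definition recharge_weight :: "('v \<times> 'v) set \<Rightarrow> ('v \<times> 'v \<Rightarrow> rweight) \<Rightarrow> bool" where
  "recharge_weight E w \<longleftrightarrow> (\<forall>e\<in>E. \<forall>k. w e = Wt k \<longrightarrow> k \<le> 0)"

definition no_recharge :: "('v \<times> 'v \<Rightarrow> rweight) \<Rightarrow> 'v list \<Rightarrow> bool" where
  "no_recharge w xs \<longleftrightarrow> (\<forall>e\<in>set (edges xs). w e \<noteq> Rch)"

definition EL :: "('v \<times> 'v \<Rightarrow> rweight) \<Rightarrow> 'v list \<Rightarrow> int" where
  "EL w xs = sum_list (map (\<lambda>e. case w e of Wt k \<Rightarrow> k | Rch \<Rightarrow> 0) (edges xs))"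

text \<open>EL_cap(v0...vn) = cap + EL(x), x the longest suffix with no R-edge.\<close>
definition EL_cap :: "('v \<times> 'v \<Rightarrow> rweight) \<Rightarrow> nat \<Rightarrow> 'v list \<Rightarrow> int" where
  "EL_cap w cap xs = int cap + EL w (drop (LEAST k. no_recharge w (drop k xs)) xs)"

definition Recharge :: "('v \<times> 'v \<Rightarrow> rweight) \<Rightarrow> nat \<Rightarrow> (nat \<Rightarrow> 'v) set" where
  "Recharge w cap = {\<rho>. \<forall>n. EL_cap w cap (prefix \<rho> n) \<ge> 0}"

definition AvgRecharge :: "('v \<times> 'v \<Rightarrow> rweight) \<Rightarrow> nat \<Rightarrow> nat \<Rightarrow> (nat \<Rightarrow> 'v) set" where
  "AvgRecharge w cap t =
     {\<rho>. limsup (\<lambda>n. ereal ((\<Sum>i<n. real_of_int (EL_cap w cap (prefix \<rho> i))) / real n))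
           \<le> ereal (real t)} \<inter> Recharge w cap"

end

theory Submission
  imports Defs
begin


definition push :: "'a \<Rightarrow> 'a list \<Rightarrow> 'a list" where
  "push y p = (if y \<in> set p then takeWhile (\<lambda>z. z \<noteq> y) p @ [y] else p @ [y])"

definition stk :: "'a list \<Rightarrow> 'a list" where
  "stk h = foldl (\<lambda>p y. push y p) [] h"

lemma stk_snoc[simp]: "stk (h @ [y]) = push y (stk h)"
  by (simp add: stk_def)

lemma stk_Nil[simp]: "stk [] = []" by (simp add: stk_def)

lemma push_distinct: "distinct p \<Longrightarrow> distinct (push y p)"
proof -
  assume "distinct p"
  show ?thesis
  proof (cases "y \<in> set p")
    case True
    have "distinct (takeWhile (\<lambda>z. z \<noteq> y) p)"
      using \<open>distinct p\<close> distinct_takeWhile by blast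
    moreover have "y \<notin> set (takeWhile (\<lambda>z. z \<noteq> y) p)"
      using set_takeWhileD by fastforce
    ultimately show ?thesis using True by (simp add: push_def)
  next
    case False then show ?thesis using \<open>distinct p\<close> by (simp add: push_def)
  qed
qed

lemma push_set: "set (push y p) \<subseteq> insert y (set p)"
  by (auto simp: push_def dest: set_takeWhileD)

lemma push_last: "push y p \<noteq> [] \<and> last (push y p) = y"
  by (simp add: push_def)

lemma stk_distinct: "distinct (stk h)"
  by (induction h rule: rev_induct) (auto intro: push_distinct)

lemma stk_set: "set (stk h) \<subseteq> set h"
  by (induction h rule: rev_induct) (use push_set in fastforce)+

lemma stk_last: "h \<noteq> [] \<Longrightarrow> stk h \<noteq> [] \<and> last (stk h) = last h"
  by (induction h rule: rev_induct) (auto simp: push_last)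

lemma tw_take: "y \<in> set p \<Longrightarrow> takeWhile (\<lambda>z. z \<noteq> y) p @ [y] = take (Suc (length (takeWhile (\<lambda>z. z \<noteq> y) p))) p"
  by (induction p) auto

lemma tw_len: "y \<in> set p \<Longrightarrow> length (takeWhile (\<lambda>z. z \<noteq> y) p) < length p"
  by (induction p) auto

lemma push_prefix: "y \<in> set p \<Longrightarrow> \<exists>k. 0 < k \<and> k \<le> length p \<and> push y p = take k p"
  apply (rule exI[of _ "Suc (length (takeWhile (\<lambda>z. z \<noteq> y) p))"])
  apply (simp add: push_def tw_take Suc_le_eq tw_len)
  done

lemma push_sum_close:
  fixes d :: "'a \<Rightarrow> int"
  assumes "y \<in> set p"
  shows "sum_list (map d p) + d y = sum_list (map d (push y p))
          + sum_list (map d (dropWhile (\<lambda>z. z \<noteq> y) p))"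
proof -
  have "p = takeWhile (\<lambda>z. z \<noteq> y) p @ dropWhile (\<lambda>z. z \<noteq> y) p" by simp
  then have "sum_list (map d p) = sum_list (map d (takeWhile (\<lambda>z. z \<noteq> y) p))
            + sum_list (map d (dropWhile (\<lambda>z. z \<noteq> y) p))"
    by (metis map_append sum_list_append)
  then show ?thesis using assms by (simp add: push_def)
qed

lemma push_len_close:
  assumes "y \<in> set p"
  shows "length p + 1 = length (push y p) + length (dropWhile (\<lambda>z. z \<noteq> y) p)"
proof -
  have "length p = length (takeWhile (\<lambda>z. z \<noteq> y) p) + length (dropWhile (\<lambda>z. z \<noteq> y) p)"
    by (metis length_append takeWhile_dropWhile_id)
  then show ?thesis using assms by (simp add: push_def)
qed




definition arena_ok :: "'a set \<Rightarrow> ('a \<times> 'a) set \<Rightarrow> bool" where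
  "arena_ok S Ed \<longleftrightarrow> Ed \<subseteq> S \<times> S \<and> (\<forall>s\<in>S. \<exists>y. (s, y) \<in> Ed)"

definition valid :: "'a set \<Rightarrow> ('a \<times> 'a) set \<Rightarrow> ('a list \<Rightarrow> 'a) \<Rightarrow> bool" where
  "valid A0 Ed \<sigma> \<longleftrightarrow> (\<forall>h. h \<noteq> [] \<longrightarrow> last h \<in> A0 \<longrightarrow> (last h, \<sigma> h) \<in> Ed)"

definition Bounded :: "('a \<Rightarrow> int) \<Rightarrow> (nat \<Rightarrow> 'a) \<Rightarrow> bool" where
  "Bounded d \<rho> \<longleftrightarrow> (\<exists>K. \<forall>n. (\<Sum>i<n. d (\<rho> i)) \<le> K)"

definition Bad :: "nat \<Rightarrow> ('a \<Rightarrow> int) \<Rightarrow> (nat \<Rightarrow> 'a) \<Rightarrow> bool" where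
  "Bad N d \<rho> \<longleftrightarrow> (\<exists>K. \<forall>n. int n \<le> int N * (\<Sum>i<n. d (\<rho> i)) + K)"

inductive W0 :: "'a set \<Rightarrow> ('a \<Rightarrow> int) \<Rightarrow> ('a \<times> 'a) set \<Rightarrow> 'a list \<Rightarrow> bool"
  for A0 d Ed where
  w0: "last p \<in> A0 \<Longrightarrow> (last p, y) \<in> Ed \<Longrightarrow>
        (y \<in> set p \<and> sum_list (map d (dropWhile (\<lambda>z. z \<noteq> y) p)) \<le> 0) \<or> (y \<notin> set p \<and> W0 A0 d Ed (p @ [y]))
        \<Longrightarrow> W0 A0 d Ed p"
| w1: "last p \<notin> A0 \<Longrightarrow> \<forall>y. (last p, y) \<in> Ed \<longrightarrow>
        ((y \<in> set p \<and> sum_list (map d (dropWhile (\<lambda>z. z \<noteq> y) p)) \<le> 0) \<or> (y \<notin> set p \<and> W0 A0 d Ed (p @ [y])))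
        \<Longrightarrow> W0 A0 d Ed p"

definition cok :: "'a set \<Rightarrow> ('a \<Rightarrow> int) \<Rightarrow> ('a \<times> 'a) set \<Rightarrow> 'a list \<Rightarrow> 'a \<Rightarrow> bool" where
  "cok A0 d Ed p y \<longleftrightarrow> (y \<in> set p \<and> sum_list (map d (dropWhile (\<lambda>z. z \<noteq> y) p)) \<le> 0) \<or> (y \<notin> set p \<and> W0 A0 d Ed (p @ [y]))"

lemma W0_unfold: "W0 A0 d Ed p \<longleftrightarrow>
   (if last p \<in> A0 then (\<exists>y. (last p, y) \<in> Ed \<and> cok A0 d Ed p y) else (\<forall>y. (last p, y) \<in> Ed \<longrightarrow> cok A0 d Ed p y))"
  unfolding cok_def
  apply (rule iffI)
   apply (erule W0.cases; auto)
  apply (auto split: if_splits intro: W0.intros)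
  done

lemma prefix_0[simp]: "prefix \<rho> 0 = [\<rho> 0]" by (simp add: prefix_def)
lemma prefix_Suc[simp]: "prefix \<rho> (Suc n) = prefix \<rho> n @ [\<rho> (Suc n)]" by (simp add: prefix_def)
lemma prefix_ne[simp]: "prefix \<rho> n \<noteq> []" by (simp add: prefix_def)
lemma last_prefix[simp]: "last (prefix \<rho> n) = \<rho> n" by (induction n) auto
lemma stk_single[simp]: "stk [x] = [x]" by (simp add: stk_def push_def)

lemma sum_prefix: "sum_list (map d (prefix \<rho> n)) = (\<Sum>i<Suc n. d (\<rho> i))"
  by (induction n) auto

lemma good_sum:
  fixes d :: "'a \<Rightarrow> int"
  assumes "\<And>n. \<rho> (Suc n) \<in> set (stk (prefix \<rho> n)) \<Longrightarrow>
             sum_list (map d (dropWhile (\<lambda>z. z \<noteq> \<rho> (Suc n)) (stk (prefix \<rho> n)))) \<le> 0"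
  shows "sum_list (map d (prefix \<rho> n)) \<le> sum_list (map d (stk (prefix \<rho> n)))"
proof (induction n)
  case 0 then show ?case by simp
next
  case (Suc n)
  let ?p = "stk (prefix \<rho> n)" and ?y = "\<rho> (Suc n)"
  show ?case
  proof (cases "?y \<in> set ?p")
    case True
    have "sum_list (map d ?p) + d ?y = sum_list (map d (push ?y ?p))
          + sum_list (map d (dropWhile (\<lambda>z. z \<noteq> ?y) ?p))" by (rule push_sum_close[OF True])
    then show ?thesis using Suc assms[OF True] by simp
  next
    case False then show ?thesis using Suc by (simp add: push_def)
  qed
qed

lemma bad_sum:
  fixes d :: "'a \<Rightarrow> int"
  assumes "\<And>n. \<rho> (Suc n) \<in> set (stk (prefix \<rho> n)) \<Longrightarrow>
             sum_list (map d (dropWhile (\<lambda>z. z \<noteq> \<rho> (Suc n)) (stk (prefix \<rho> n)))) \<ge> 1"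
    and "\<And>n. length (stk (prefix \<rho> n)) \<le> N"
  shows "int N * sum_list (map d (stk (prefix \<rho> n))) - int (length (stk (prefix \<rho> n)))
         \<le> int N * sum_list (map d (prefix \<rho> n)) - int (length (prefix \<rho> n))"
proof (induction n)
  case 0 then show ?case by simp
next
  case (Suc n)
  let ?p = "stk (prefix \<rho> n)" and ?y = "\<rho> (Suc n)"
  show ?case
  proof (cases "?y \<in> set ?p")
    case True
    let ?c = "dropWhile (\<lambda>z. z \<noteq> ?y) ?p"
    have e1: "sum_list (map d ?p) + d ?y = sum_list (map d (push ?y ?p))
          + sum_list (map d ?c)" by (rule push_sum_close[OF True])
    have e2: "length ?p + 1 = length (push ?y ?p) + length ?c" by (rule push_len_close[OF True])
    have c1: "sum_list (map d ?c) \<ge> 1" using assms(1)[OF True] .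
    have "length ?c \<le> length ?p" by (simp add: length_dropWhile_le)
    also have "\<dots> \<le> N" using assms(2) .
    finally have l1: "int (length ?c) \<le> int N" by simp
    have "int N * 1 \<le> int N * sum_list (map d ?c)" by (rule mult_left_mono) (use c1 in auto)
    with l1 have l2: "int (length ?c) \<le> int N * sum_list (map d ?c)" by simp
    have e1': "int N * sum_list (map d ?p) + int N * d ?y = int N * sum_list (map d (push ?y ?p)) + int N * sum_list (map d ?c)"
      using e1 by (metis distrib_left)
    have e2': "int (length ?p) + 1 = int (length (push ?y ?p)) + int (length ?c)" using e2 by linarith
    show ?thesis using Suc.IH e1' e2' l2 by (simp add: algebra_simps)
  next
    case False then show ?thesis using Suc by (simp add: push_def algebra_simps)
  qed
qed

lemma distinct_bounds:
  fixes d :: "'a \<Rightarrow> int"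
  assumes "finite S" "distinct xs" "set xs \<subseteq> S"
  shows "length xs \<le> card S" "\<bar>sum_list (map d xs)\<bar> \<le> (\<Sum>x\<in>S. \<bar>d x\<bar>)"
proof -
  show "length xs \<le> card S"
    using assms by (metis card_mono distinct_card)
  have "sum_list (map d xs) = sum d (set xs)" using assms(2) by (simp add: sum_list_distinct_conv_sum_set)
  then have "\<bar>sum_list (map d xs)\<bar> \<le> (\<Sum>x\<in>set xs. \<bar>d x\<bar>)" by (simp add: sum_abs)
  also have "\<dots> \<le> (\<Sum>x\<in>S. \<bar>d x\<bar>)" using assms by (intro sum_mono2) auto
  finally show "\<bar>sum_list (map d xs)\<bar> \<le> (\<Sum>x\<in>S. \<bar>d x\<bar>)" .
qed



lemma stack_invariant:
  assumes "Q [\<rho> 0]"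
    and step: "\<And>n. (\<forall>k. 0 < k \<longrightarrow> k \<le> length (stk (prefix \<rho> n)) \<longrightarrow> Q (take k (stk (prefix \<rho> n))))
       \<Longrightarrow> \<rho> (Suc n) \<notin> set (stk (prefix \<rho> n)) \<Longrightarrow> Q (stk (prefix \<rho> n) @ [\<rho> (Suc n)])"
  shows "\<forall>k. 0 < k \<longrightarrow> k \<le> length (stk (prefix \<rho> n)) \<longrightarrow> Q (take k (stk (prefix \<rho> n)))"
proof (induction n)
  case 0
  show ?case
  proof (intro allI impI)
    fix k :: nat assume "0 < k" "k \<le> length (stk (prefix \<rho> 0))"
    then have "k = 1" by simp
    then show "Q (take k (stk (prefix \<rho> 0)))" using assms(1) by simp
  qed
next
  case (Suc n)
  let ?p = "stk (prefix \<rho> n)" and ?y = "\<rho> (Suc n)"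
  show ?case
  proof (cases "?y \<in> set ?p")
    case True
    then obtain k0 where k0: "0 < k0" "k0 \<le> length ?p" "push ?y ?p = take k0 ?p"
      using push_prefix[OF True] by blast
    show ?thesis
    proof (intro allI impI)
      fix k assume "0 < k" "k \<le> length (stk (prefix \<rho> (Suc n)))"
      then have "k \<le> k0" using k0 by simp
      then have "take k (stk (prefix \<rho> (Suc n))) = take k ?p" using k0 by (simp add: min_def)
      moreover have "k \<le> length ?p" using \<open>k \<le> k0\<close> k0 by simp
      ultimately show "Q (take k (stk (prefix \<rho> (Suc n))))" using Suc[rule_format, of k] \<open>0 < k\<close> by simp
    qed
  next
    case False
    have Q: "Q (?p @ [?y])" using step[OF Suc False] .
    show ?thesis
    proof (intro allI impI)
      fix k assume "0 < k" "k \<le> length (stk (prefix \<rho> (Suc n)))"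
      then have "k \<le> length ?p \<or> k = Suc (length ?p)" using False by (auto simp: push_def)
      then show "Q (take k (stk (prefix \<rho> (Suc n))))"
      proof
        assume "k \<le> length ?p"
        then show ?thesis using Suc[rule_format, of k] \<open>0 < k\<close> False by (simp add: push_def)
      next
        assume "k = Suc (length ?p)"
        then show ?thesis using Q False by (simp add: push_def)
      qed
    qed
  qed
qed




lemma play_in_S:
  assumes "arena_ok S Ed" "s \<in> S" "play Ed s \<rho>"
  shows "\<rho> n \<in> S"
proof (cases n)
  case 0 then show ?thesis using assms by (simp add: play_def)
next
  case (Suc m)
  have "(\<rho> m, \<rho> (Suc m)) \<in> Ed" using assms(3) by (simp add: play_def)
  then show ?thesis using assms(1) Suc by (auto simp: arena_ok_def)
qed

lemma set_prefix: "set (prefix \<rho> n) = \<rho> ` {..n}"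
  by (induction n) (auto simp: atMost_Suc)

lemma stk_bounds:
  fixes d :: "'a \<Rightarrow> int"
  assumes "finite S" "\<And>n. \<rho> n \<in> S"
  shows "length (stk (prefix \<rho> n)) \<le> card S"
    "\<bar>sum_list (map d (stk (prefix \<rho> n)))\<bar> \<le> (\<Sum>x\<in>S. \<bar>d x\<bar>)"
proof -
  have "set (stk (prefix \<rho> n)) \<subseteq> S" using stk_set[of "prefix \<rho> n"] set_prefix[of \<rho> n] assms(2) by auto
  then show "length (stk (prefix \<rho> n)) \<le> card S"
    "\<bar>sum_list (map d (stk (prefix \<rho> n)))\<bar> \<le> (\<Sum>x\<in>S. \<bar>d x\<bar>)"
    using distinct_bounds[OF assms(1) stk_distinct] by auto
qed

lemma W0_top:
  assumes "\<forall>k. 0 < k \<longrightarrow> k \<le> length p \<longrightarrow> Q (take k p)" "p \<noteq> []"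
  shows "Q p"
  using assms(1)[rule_format, of "length p"] assms(2) by simp

lemma L1:
  fixes d :: "'a \<Rightarrow> int"
  assumes ar: "arena_ok S Ed" and fin: "finite S" and A0S: "A0 \<subseteq> S" and s: "s \<in> S"
    and W: "W0 A0 d Ed [s]"
  shows "\<exists>\<sigma>. valid A0 Ed \<sigma> \<and> (\<forall>\<rho>. play Ed s \<rho> \<and> consistent A0 \<sigma> \<rho> \<longrightarrow> Bounded d \<rho>)"
proof -
  define \<sigma> where "\<sigma> h = (if \<exists>y. (last h, y) \<in> Ed \<and> cok A0 d Ed (stk h) y
      then SOME y. (last h, y) \<in> Ed \<and> cok A0 d Ed (stk h) y else SOME y. (last h, y) \<in> Ed)" for h
  have val: "valid A0 Ed \<sigma>"
    unfolding valid_def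
  proof (intro allI impI)
    fix h :: "'a list" assume "h \<noteq> []" "last h \<in> A0"
    then have ex: "\<exists>y. (last h, y) \<in> Ed" using ar A0S by (auto simp: arena_ok_def)
    show "(last h, \<sigma> h) \<in> Ed"
    proof (cases "\<exists>y. (last h, y) \<in> Ed \<and> cok A0 d Ed (stk h) y")
      case True
      show ?thesis unfolding \<sigma>_def if_P[OF True] by (rule conjunct1[OF someI_ex[OF True]])
    next
      case False
      show ?thesis unfolding \<sigma>_def if_not_P[OF False] by (rule someI_ex[OF ex])
    qed
  qed
  have win: "Bounded d \<rho>" if pl: "play Ed s \<rho>" and co: "consistent A0 \<sigma> \<rho>" for \<rho>
  proof -
    have inS: "\<And>n. \<rho> n \<in> S" using play_in_S[OF ar s pl] .
    have cokstep: "cok A0 d Ed (stk (prefix \<rho> n)) (\<rho> (Suc n))"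
      if W0p: "W0 A0 d Ed (stk (prefix \<rho> n))" for n
    proof -
      let ?p = "stk (prefix \<rho> n)"
      have lp: "last ?p = \<rho> n" using stk_last[of "prefix \<rho> n"] by simp
      have edge: "(\<rho> n, \<rho> (Suc n)) \<in> Ed" using pl by (simp add: play_def)
      show ?thesis
      proof (cases "\<rho> n \<in> A0")
        case True
        then have ex: "\<exists>y. (\<rho> n, y) \<in> Ed \<and> cok A0 d Ed ?p y" using W0p W0_unfold[of A0 d Ed ?p] lp by simp
        have "\<rho> (Suc n) = \<sigma> (prefix \<rho> n)" using co True by (simp add: consistent_def)
        also have "\<dots> = (SOME y. (\<rho> n, y) \<in> Ed \<and> cok A0 d Ed ?p y)" unfolding \<sigma>_def last_prefix if_P[OF ex] ..
        finally show ?thesis using someI_ex[OF ex] by simp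
      next
        case False
        then show ?thesis using W0p W0_unfold[of A0 d Ed ?p] lp edge by simp
      qed
    qed
    have inv: "\<forall>k. 0 < k \<longrightarrow> k \<le> length (stk (prefix \<rho> n)) \<longrightarrow> W0 A0 d Ed (take k (stk (prefix \<rho> n)))" for n
    proof (rule stack_invariant[where Q = "W0 A0 d Ed"])
      show "W0 A0 d Ed [\<rho> 0]" using W pl by (simp add: play_def)
    next
      fix m assume h: "\<forall>k. 0 < k \<longrightarrow> k \<le> length (stk (prefix \<rho> m)) \<longrightarrow> W0 A0 d Ed (take k (stk (prefix \<rho> m)))"
        and ny: "\<rho> (Suc m) \<notin> set (stk (prefix \<rho> m))"
      have "W0 A0 d Ed (stk (prefix \<rho> m))" using W0_top[OF h] stk_last[of "prefix \<rho> m"] by simp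
      then show "W0 A0 d Ed (stk (prefix \<rho> m) @ [\<rho> (Suc m)])" using cokstep[of m] ny by (simp add: cok_def)
    qed
    have closes: "sum_list (map d (dropWhile (\<lambda>z. z \<noteq> \<rho> (Suc n)) (stk (prefix \<rho> n)))) \<le> 0"
      if "\<rho> (Suc n) \<in> set (stk (prefix \<rho> n))" for n
    proof -
      have "W0 A0 d Ed (stk (prefix \<rho> n))" using W0_top[OF inv] stk_last[of "prefix \<rho> n"] by simp
      then show ?thesis using cokstep[of n] that by (simp add: cok_def)
    qed
    define B where "B = (\<Sum>x\<in>S. \<bar>d x\<bar>)"
    have B0: "0 \<le> B" unfolding B_def by (simp add: sum_nonneg)
    have "(\<Sum>i<n. d (\<rho> i)) \<le> B" for n
    proof (cases n)
      case 0 then show ?thesis using B0 by simp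
    next
      case (Suc m)
      have "sum_list (map d (prefix \<rho> m)) \<le> sum_list (map d (stk (prefix \<rho> m)))"
        by (rule good_sum) (rule closes)
      also have "\<dots> \<le> B" using stk_bounds(2)[where S=S and \<rho>=\<rho> and d=d and n=m, OF fin inS] unfolding B_def by linarith
      finally show ?thesis using Suc sum_prefix[of d \<rho> m] by simp
    qed
    then show ?thesis unfolding Bounded_def by blast
  qed
  show ?thesis using val win by blast
qed

lemma L2:
  fixes d :: "'a \<Rightarrow> int"
  assumes ar: "arena_ok S Ed" and fin: "finite S" and A0S: "A0 \<subseteq> S" and s: "s \<in> S"
    and W: "\<not> W0 A0 d Ed [s]" and val: "valid A0 Ed \<sigma>"
  shows "\<exists>\<rho>. play Ed s \<rho> \<and> consistent A0 \<sigma> \<rho> \<and> Bad (card S) d \<rho>"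
proof -
  define nxt where "nxt h = (if last h \<in> A0 then \<sigma> h else
      if \<exists>y. (last h, y) \<in> Ed \<and> \<not> cok A0 d Ed (stk h) y
      then SOME y. (last h, y) \<in> Ed \<and> \<not> cok A0 d Ed (stk h) y else SOME y. (last h, y) \<in> Ed)" for h
  define hist where "hist = rec_nat [s] (\<lambda>_ h. h @ [nxt h])"
  have hist0: "hist 0 = [s]" and histS: "hist (Suc n) = hist n @ [nxt (hist n)]" for n
    by (simp_all add: hist_def)
  define \<rho> where "\<rho> n = last (hist n)" for n
  have pre: "prefix \<rho> n = hist n" for n
    by (induction n) (simp_all add: \<rho>_def hist0 histS)
  have \<rho>S: "\<rho> (Suc n) = nxt (prefix \<rho> n)" for n
    by (simp add: \<rho>_def pre histS)
  have \<rho>0: "\<rho> 0 = s" by (simp add: \<rho>_def hist0)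
  have edge: "(\<rho> n, \<rho> (Suc n)) \<in> Ed \<and> \<rho> (Suc n) \<in> S" if "\<rho> n \<in> S" for n
  proof -
    have ex: "\<exists>y. (\<rho> n, y) \<in> Ed" using ar that by (auto simp: arena_ok_def)
    have "(\<rho> n, nxt (prefix \<rho> n)) \<in> Ed"
    proof (cases "\<rho> n \<in> A0")
      case True then show ?thesis using val[unfolded valid_def, rule_format, of "prefix \<rho> n"] by (simp add: nxt_def)
    next
      case False
      show ?thesis
      proof (cases "\<exists>y. (\<rho> n, y) \<in> Ed \<and> \<not> cok A0 d Ed (stk (prefix \<rho> n)) y")
        case True
        show ?thesis unfolding nxt_def last_prefix if_not_P[OF False] if_P[OF True]
          by (rule conjunct1[OF someI_ex[OF True]])
      next
        case F2: False
        show ?thesis unfolding nxt_def last_prefix if_not_P[OF False] if_not_P[OF F2]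
          by (rule someI_ex[OF ex])
      qed
    qed
    then show ?thesis using ar by (auto simp: \<rho>S arena_ok_def)
  qed
  have inS: "\<rho> n \<in> S" for n
    by (induction n) (use \<rho>0 s edge in auto)
  have pl: "play Ed s \<rho>" using \<rho>0 edge inS by (simp add: play_def)
  have co: "consistent A0 \<sigma> \<rho>" by (simp add: consistent_def \<rho>S nxt_def)
  have cokstep: "\<not> cok A0 d Ed (stk (prefix \<rho> n)) (\<rho> (Suc n))"
    if W0p: "\<not> W0 A0 d Ed (stk (prefix \<rho> n))" for n
  proof -
    let ?p = "stk (prefix \<rho> n)"
    have lp: "last ?p = \<rho> n" using stk_last[of "prefix \<rho> n"] by simp
    have e: "(\<rho> n, \<rho> (Suc n)) \<in> Ed" using edge inS by blast
    show ?thesis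
    proof (cases "\<rho> n \<in> A0")
      case True
      then show ?thesis using W0p W0_unfold[of A0 d Ed ?p] lp e by auto
    next
      case False
      then have ex: "\<exists>y. (\<rho> n, y) \<in> Ed \<and> \<not> cok A0 d Ed ?p y" using W0p W0_unfold[of A0 d Ed ?p] lp by simp
      have "\<rho> (Suc n) = (SOME y. (\<rho> n, y) \<in> Ed \<and> \<not> cok A0 d Ed ?p y)"
        unfolding \<rho>S nxt_def last_prefix if_not_P[OF False] if_P[OF ex] ..
      then show ?thesis using someI_ex[OF ex] by simp
    qed
  qed
  have inv: "\<forall>k. 0 < k \<longrightarrow> k \<le> length (stk (prefix \<rho> n)) \<longrightarrow> \<not> W0 A0 d Ed (take k (stk (prefix \<rho> n)))" for n
  proof (rule stack_invariant[where Q = "\<lambda>p. \<not> W0 A0 d Ed p"])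
    show "\<not> W0 A0 d Ed [\<rho> 0]" using W \<rho>0 by simp
  next
    fix m assume h: "\<forall>k. 0 < k \<longrightarrow> k \<le> length (stk (prefix \<rho> m)) \<longrightarrow> \<not> W0 A0 d Ed (take k (stk (prefix \<rho> m)))"
      and ny: "\<rho> (Suc m) \<notin> set (stk (prefix \<rho> m))"
    have "\<not> W0 A0 d Ed (stk (prefix \<rho> m))" using W0_top[OF h] stk_last[of "prefix \<rho> m"] by simp
    then show "\<not> W0 A0 d Ed (stk (prefix \<rho> m) @ [\<rho> (Suc m)])" using cokstep[of m] ny by (simp add: cok_def)
  qed
  have closes: "sum_list (map d (dropWhile (\<lambda>z. z \<noteq> \<rho> (Suc n)) (stk (prefix \<rho> n)))) \<ge> 1"
    if "\<rho> (Suc n) \<in> set (stk (prefix \<rho> n))" for n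
  proof -
    have "\<not> W0 A0 d Ed (stk (prefix \<rho> n))" using W0_top[OF inv] stk_last[of "prefix \<rho> n"] by simp
    then show ?thesis using cokstep[of n] that by (simp add: cok_def)
  qed
  define B where "B = (\<Sum>x\<in>S. \<bar>d x\<bar>)"
  define N where "N = card S"
  have B0: "0 \<le> B" unfolding B_def by (simp add: sum_nonneg)
  have "int n \<le> int N * (\<Sum>i<n. d (\<rho> i)) + (int N * B + int N)" for n
  proof (cases n)
    case 0 then show ?thesis using B0 by simp
  next
    case (Suc m)
    have lenb: "length (stk (prefix \<rho> k)) \<le> N" for k using stk_bounds(1)[where S=S and \<rho>=\<rho> and n=k, OF fin inS] N_def by simp
    have "int N * sum_list (map d (stk (prefix \<rho> m))) - int (length (stk (prefix \<rho> m)))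
         \<le> int N * sum_list (map d (prefix \<rho> m)) - int (length (prefix \<rho> m))"
      by (rule bad_sum) (rule closes, assumption, rule lenb)
    moreover have "- B \<le> sum_list (map d (stk (prefix \<rho> m)))"
      using stk_bounds(2)[where S=S and \<rho>=\<rho> and d=d and n=m, OF fin inS] unfolding B_def by linarith
    then have "int N * (- B) \<le> int N * sum_list (map d (stk (prefix \<rho> m)))"
      by (rule mult_left_mono) simp
    moreover have "int (length (stk (prefix \<rho> m))) \<le> int N" using lenb[of m] by simp
    moreover have "length (prefix \<rho> m) = Suc m" by (simp add: prefix_def)
    ultimately show ?thesis using Suc sum_prefix[of d \<rho> m] by (simp add: algebra_simps)
  qed
  then have "Bad (card S) d \<rho>" unfolding Bad_def N_def by blast
  then show ?thesis using pl co by blast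
qed




definition goodPos :: "'a set \<Rightarrow> ('a \<Rightarrow> int) \<Rightarrow> ('a \<times> 'a) set \<Rightarrow> ('a \<Rightarrow> 'a) \<Rightarrow> 'a \<Rightarrow> bool" where
  "goodPos A0 d Ed \<pi> s \<longleftrightarrow> (\<forall>\<rho>. play Ed s \<rho> \<and> consistent A0 (\<lambda>h. \<pi> (last h)) \<rho> \<longrightarrow> Bounded d \<rho>)"

lemma sum_shift: "(\<Sum>i<n + k. f i) = (\<Sum>i<k. f i) + (\<Sum>i<n. f (i + k)) " for f :: "nat \<Rightarrow> int"
proof (induction n)
  case 0 then show ?case by simp
next
  case (Suc n) then show ?case by (simp add: add.commute)
qed

lemma Bad_shift:
  assumes "Bad N d \<rho>" shows "Bad N d (\<lambda>i. \<rho> (i + k))"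
proof -
  obtain K where K: "\<And>n. int n \<le> int N * (\<Sum>i<n. d (\<rho> i)) + K" using assms unfolding Bad_def by blast
  have "int n \<le> int N * (\<Sum>i<n. d (\<rho> (i + k))) + (int N * (\<Sum>i<k. d (\<rho> i)) + K)" for n
  proof -
    have "int (n + k) \<le> int N * (\<Sum>i<n + k. d (\<rho> i)) + K" by (rule K)
    moreover have "(\<Sum>i<n + k. d (\<rho> i)) = (\<Sum>i<k. d (\<rho> i)) + (\<Sum>i<n. d (\<rho> (i + k)))"
      by (rule sum_shift)
    ultimately show ?thesis by (simp add: algebra_simps)
  qed
  then show ?thesis unfolding Bad_def by blast
qed

lemma Bounded_suffix:
  fixes d :: "'a \<Rightarrow> int"
  assumes "Bounded d \<rho>" shows "Bounded d (\<lambda>i. \<rho> (i + k))"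
proof -
  obtain K where K: "\<And>n. (\<Sum>i<n. d (\<rho> i)) \<le> K" using assms unfolding Bounded_def by blast
  have "(\<Sum>i<n. d (\<rho> (i + k))) \<le> K - (\<Sum>i<k. d (\<rho> i))" for n
    using K[of "n + k"] sum_shift[of "\<lambda>i. d (\<rho> i)" n k] by linarith
  then show ?thesis unfolding Bounded_def by blast
qed

lemma Bounded_unshift:
  fixes d :: "'a \<Rightarrow> int"
  assumes "Bounded d (\<lambda>i. \<rho> (i + k))" shows "Bounded d \<rho>"
proof -
  obtain K where K: "\<And>n. (\<Sum>i<n. d (\<rho> (i + k))) \<le> K" using assms unfolding Bounded_def by blast
  define C where "C = (\<Sum>i<k. \<bar>d (\<rho> i)\<bar>)"
  have "(\<Sum>i<n. d (\<rho> i)) \<le> C + max K 0" for n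
  proof (cases "n \<le> k")
    case True
    have "(\<Sum>i<n. d (\<rho> i)) \<le> (\<Sum>i<n. \<bar>d (\<rho> i)\<bar>)" by (intro sum_mono) simp
    also have "\<dots> \<le> C" unfolding C_def using True by (intro sum_mono2) auto
    finally show ?thesis by simp
  next
    case False
    then obtain m where m: "n = m + k" by (metis add.commute le_add_diff_inverse nat_le_linear)
    have "(\<Sum>i<k. d (\<rho> i)) \<le> C" unfolding C_def by (intro sum_mono) simp
    then show ?thesis using K[of m] m sum_shift[of "\<lambda>i. d (\<rho> i)" m k] by simp
  qed
  then show ?thesis unfolding Bounded_def by blast
qed

lemma not_both:
  fixes d :: "'a \<Rightarrow> int"
  assumes "Bad N d \<rho>" "Bounded d \<rho>" shows False
proof -
  obtain K where K: "\<And>n. int n \<le> int N * (\<Sum>i<n. d (\<rho> i)) + K" using assms unfolding Bad_def by blast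
  obtain K' where K': "\<And>n. (\<Sum>i<n. d (\<rho> i)) \<le> K'" using assms unfolding Bounded_def by blast
  define n where "n = Suc (nat (int N * K' + K))"
  have "int N * (\<Sum>i<n. d (\<rho> i)) \<le> int N * K'" using K'[of n] by (intro mult_left_mono) auto
  then have "int n \<le> int N * K' + K" using K[of n] by linarith
  then show False unfolding n_def by linarith
qed

lemma consistent_cong:
  assumes "consistent A0 \<sigma> \<rho>" "\<And>n. \<sigma> (prefix \<rho> n) = \<sigma>' (prefix \<rho> n)"
  shows "consistent A0 \<sigma>' \<rho>"
  using assms by (simp add: consistent_def)

lemma suffix_play:
  assumes "play Ed s \<rho>" shows "play Ed (\<rho> k) (\<lambda>i. \<rho> (i + k))"
  using assms by (simp add: play_def)

lemma prefix_cong: "(\<And>j. j \<le> i \<Longrightarrow> \<rho> j = \<rho>' j) \<Longrightarrow> prefix \<rho> i = prefix \<rho>' i"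
  by (simp add: prefix_def)

definition cat :: "nat \<Rightarrow> (nat \<Rightarrow> 'a) \<Rightarrow> (nat \<Rightarrow> 'a) \<Rightarrow> nat \<Rightarrow> 'a" where
  "cat k \<rho> \<rho>' i = (if i < k then \<rho> i else \<rho>' (i - k))"

lemma cat_shift[simp]: "cat k \<rho> \<rho>' (i + k) = \<rho>' i"
  by (simp add: cat_def)

lemma cat_shift_fun: "(\<lambda>i. cat k \<rho> \<rho>' (i + k)) = \<rho>'"
  by (simp add: cat_def)

lemma cat_low: "\<rho>' 0 = \<rho> k \<Longrightarrow> i \<le> k \<Longrightarrow> cat k \<rho> \<rho>' i = \<rho> i"
  by (auto simp: cat_def)

lemma cat_play:
  assumes "play Ed s \<rho>" "play Ed (\<rho> k) \<rho>'"
  shows "play Ed s (cat k \<rho> \<rho>')"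
  unfolding play_def
proof (intro conjI allI)
  show "cat k \<rho> \<rho>' 0 = s" using assms by (cases k) (auto simp: cat_def play_def)
next
  fix n
  show "(cat k \<rho> \<rho>' n, cat k \<rho> \<rho>' (Suc n)) \<in> Ed"
  proof (cases "Suc n < k")
    case True then show ?thesis using assms(1) by (simp add: cat_def play_def)
  next
    case False
    show ?thesis
    proof (cases "Suc n = k")
      case True
      have "(\<rho> n, \<rho> (Suc n)) \<in> Ed" using assms(1) by (simp add: play_def)
      then show ?thesis using True assms(2) by (simp add: cat_def play_def)
    next
      case F2: False
      then have e: "Suc n - k = Suc (n - k)" "\<not> n < k" "\<not> Suc n < k" using False by auto
      have "(\<rho>' (n - k), \<rho>' (Suc (n - k))) \<in> Ed" using assms(2) by (simp add: play_def)
      then show ?thesis using e by (simp add: cat_def)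
    qed
  qed
qed

lemma cat_prefix_low:
  assumes "\<rho>' 0 = \<rho> k" "i \<le> k" shows "prefix (cat k \<rho> \<rho>') i = prefix \<rho> i"
  using assms by (intro prefix_cong) (simp add: cat_low)

lemma cat_prefix_high:
  assumes "\<rho>' 0 = \<rho> k" "0 < k"
  shows "prefix (cat k \<rho> \<rho>') (k + j) = prefix \<rho> (k - 1) @ prefix \<rho>' j"
proof (induction j)
  case 0
  have "prefix (cat k \<rho> \<rho>') k = prefix (cat k \<rho> \<rho>') (k - 1) @ [cat k \<rho> \<rho>' k]"
    using assms(2) prefix_Suc[of "cat k \<rho> \<rho>'" "k - 1"] by simp
  also have "\<dots> = prefix \<rho> (k - 1) @ [\<rho>' 0]" using assms cat_prefix_low[where \<rho>=\<rho> and \<rho>'=\<rho>' and k=k and i="k - 1", OF assms(1)]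
    by (simp add: cat_def)
  finally show ?case by simp
next
  case (Suc j)
  then show ?case using cat_shift[of k \<rho> \<rho>' "Suc j"] by (simp add: add.commute)
qed

lemma cat_consistent:
  assumes "\<rho>' 0 = \<rho> k" "0 < k"
    and c1: "\<And>i. i < k \<Longrightarrow> \<rho> i \<in> A0 \<Longrightarrow> \<rho> (Suc i) = \<sigma> (prefix \<rho> i)"
    and c2: "consistent A0 (\<lambda>x. \<sigma> (prefix \<rho> (k - 1) @ x)) \<rho>'"
  shows "consistent A0 \<sigma> (cat k \<rho> \<rho>')"
  unfolding consistent_def
proof (intro allI impI)
  fix i assume A: "cat k \<rho> \<rho>' i \<in> A0"
  show "cat k \<rho> \<rho>' (Suc i) = \<sigma> (prefix (cat k \<rho> \<rho>') i)"
  proof (cases "i < k")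
    case True
    have "cat k \<rho> \<rho>' (Suc i) = \<rho> (Suc i)" using True assms(1) by (intro cat_low) auto
    also have "\<dots> = \<sigma> (prefix \<rho> i)" using c1[OF True] A True assms(1) cat_low[of \<rho>' \<rho> k i] by simp
    also have "\<dots> = \<sigma> (prefix (cat k \<rho> \<rho>') i)" using cat_prefix_low[where \<rho>=\<rho> and \<rho>'=\<rho>' and k=k and i=i, OF assms(1)] True by simp
    finally show ?thesis .
  next
    case False
    then obtain j where j: "i = k + j" by (metis le_add_diff_inverse not_less)
    have "cat k \<rho> \<rho>' i = \<rho>' j" using j cat_shift[of k \<rho> \<rho>' j] by (simp add: add.commute)
    then have "\<rho>' j \<in> A0" using A by simp
    then have "\<rho>' (Suc j) = \<sigma> (prefix \<rho> (k - 1) @ prefix \<rho>' j)" using c2 by (simp add: consistent_def)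
    moreover have "cat k \<rho> \<rho>' (Suc i) = \<rho>' (Suc j)" using j cat_shift[of k \<rho> \<rho>' "Suc j"] by (simp add: add.commute)
    ultimately show ?thesis using j cat_prefix_high[where \<rho>=\<rho> and \<rho>'=\<rho>' and k=k and j=j, OF assms(1,2)] by simp
  qed
qed

lemma positional_shift:
  assumes "consistent A0 (\<lambda>h. \<pi> (last h)) \<rho>'"
  shows "consistent A0 (\<lambda>x. (\<lambda>h. \<pi> (last h)) (p @ x)) \<rho>'"
  using assms by (simp add: consistent_def)

lemma positional_suffix:
  assumes "consistent A0 (\<lambda>h. \<pi> (last h)) \<rho>"
  shows "consistent A0 (\<lambda>h. \<pi> (last h)) (\<lambda>i. \<rho> (i + k))"
  using assms by (simp add: consistent_def)




definition restr :: "'a \<Rightarrow> ('a \<times> 'a) set \<Rightarrow> ('a \<times> 'a) set \<Rightarrow> bool" where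
  "restr v Ed Ed' \<longleftrightarrow> Ed' \<subseteq> Ed \<and> (\<forall>x y. x \<noteq> v \<longrightarrow> (x, y) \<in> Ed \<longrightarrow> (x, y) \<in> Ed')"

lemma W0_transfer:
  assumes "W0 A0 d Ed q" "restr v Ed Ed'"
  shows "v \<in> set q \<Longrightarrow> last q \<noteq> v \<Longrightarrow> W0 A0 d Ed' q"
  using assms(1)
proof (induction rule: W0.induct)
  case (w0 p y)
  have e: "(last p, y) \<in> Ed'" using w0 assms(2) by (auto simp: restr_def)
  show ?case
  proof (rule W0.w0[OF w0(1) e])
    show "y \<in> set p \<and> sum_list (map d (dropWhile (\<lambda>z. z \<noteq> y) p)) \<le> 0 \<or> y \<notin> set p \<and> W0 A0 d Ed' (p @ [y])"
      using w0 by auto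
  qed
next
  case (w1 p)
  show ?case
  proof (rule W0.w1[OF w1(1)], intro allI impI)
    fix y assume "(last p, y) \<in> Ed'"
    then have "(last p, y) \<in> Ed" using assms(2) by (auto simp: restr_def)
    then show "y \<in> set p \<and> sum_list (map d (dropWhile (\<lambda>z. z \<noteq> y) p)) \<le> 0 \<or> y \<notin> set p \<and> W0 A0 d Ed' (p @ [y])"
      using w1 by auto
  qed
qed

lemma W0_split:
  assumes vA: "v \<in> A0" and W: "W0 A0 d Ed [v]"
    and r1: "restr v Ed Ed1" and r2: "restr v Ed Ed2"
    and cover: "\<And>y. (v, y) \<in> Ed \<Longrightarrow> (v, y) \<in> Ed1 \<or> (v, y) \<in> Ed2"
  shows "W0 A0 d Ed1 [v] \<or> W0 A0 d Ed2 [v]"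
proof -
  obtain y where y: "(v, y) \<in> Ed" "cok A0 d Ed [v] y" using W W0_unfold[of A0 d Ed "[v]"] vA by auto
  have gen: "W0 A0 d Edi [v]" if ri: "restr v Ed Edi" and e: "(v, y) \<in> Edi" for Edi
  proof (cases "y = v")
    case True
    then show ?thesis using y e vA by (intro W0.w0[where p="[v]" and Ed=Edi and y=y]) (auto simp: cok_def)
  next
    case False
    then have "W0 A0 d Ed [v, y]" using y by (simp add: cok_def)
    then have "W0 A0 d Edi [v, y]" using W0_transfer[OF _ ri] False by auto
    then show ?thesis using False e vA by (intro W0.w0[where p="[v]" and Ed=Edi and y=y]) auto
  qed
  show ?thesis using cover[OF y(1)] gen r1 r2 by blast
qed

lemma play_mono: "Ed' \<subseteq> Ed \<Longrightarrow> play Ed' s \<rho> \<Longrightarrow> play Ed s \<rho>"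
  by (auto simp: play_def)

lemma play_restrict:
  assumes "restr v Ed Ed'" "v \<in> A0" "(v, \<pi> v) \<in> Ed'" "play Ed s \<rho>" "consistent A0 (\<lambda>h. \<pi> (last h)) \<rho>"
  shows "play Ed' s \<rho>"
  unfolding play_def
proof (intro conjI allI)
  show "\<rho> 0 = s" using assms(4) by (simp add: play_def)
  fix n
  show "(\<rho> n, \<rho> (Suc n)) \<in> Ed'"
  proof (cases "\<rho> n = v")
    case True
    then have "\<rho> (Suc n) = \<pi> v" using assms(2,5) by (simp add: consistent_def)
    then show ?thesis using True assms(3) by simp
  next
    case False then show ?thesis using assms(1,4) by (auto simp: restr_def play_def)
  qed
qed

lemma play_avoid:
  assumes "restr v Ed Ed'" "play Ed s \<rho>" "\<And>n. \<rho> n \<noteq> v"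
  shows "play Ed' s \<rho>"
  using assms by (auto simp: restr_def play_def)

lemma caseA:
  fixes d :: "'a \<Rightarrow> int"
  assumes ar: "arena_ok S Ed" and fin: "finite S" and A0S: "A0 \<subseteq> S"
    and R: "restr v Ed Ed'" and vA: "v \<in> A0" and ar': "arena_ok S Ed'"
    and \<pi>v: "\<forall>u\<in>A0. (u, \<pi> u) \<in> Ed'"
    and IH: "\<forall>s\<in>S. W0 A0 d Ed' [s] \<longrightarrow> goodPos A0 d Ed' \<pi> s"
    and Wv: "W0 A0 d Ed' [v]" and s: "s \<in> S" and Ws: "W0 A0 d Ed [s]"
  shows "W0 A0 d Ed' [s]"
proof (rule ccontr)
  assume nW: "\<not> W0 A0 d Ed' [s]"
  obtain \<sigma> where val: "valid A0 Ed \<sigma>" and win: "\<And>\<rho>. play Ed s \<rho> \<Longrightarrow> consistent A0 \<sigma> \<rho> \<Longrightarrow> Bounded d \<rho>"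
    using L1[OF ar fin A0S s Ws] by blast
  define \<sigma>' where "\<sigma>' h = (if v \<in> set h then \<pi> (last h) else \<sigma> h)" for h
  have val': "valid A0 Ed' \<sigma>'"
    unfolding valid_def
  proof (intro allI impI)
    fix h :: "'a list" assume h: "h \<noteq> []" "last h \<in> A0"
    show "(last h, \<sigma>' h) \<in> Ed'"
    proof (cases "v \<in> set h")
      case True then show ?thesis using \<pi>v h by (simp add: \<sigma>'_def)
    next
      case False
      then have "last h \<noteq> v" using h(1) by (metis last_in_set)
      moreover have "(last h, \<sigma> h) \<in> Ed" using val h by (simp add: valid_def)
      ultimately show ?thesis using False R by (simp add: \<sigma>'_def restr_def)
    qed
  qed
  obtain \<rho> where pl: "play Ed' s \<rho>" and co: "consistent A0 \<sigma>' \<rho>" and bad: "Bad (card S) d \<rho>"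
    using L2[OF ar' fin A0S s nW val'] by blast
  show False
  proof (cases "\<exists>k. \<rho> k = v")
    case True
    then obtain k where k: "\<rho> k = v" by blast
    have pl': "play Ed' v (\<lambda>i. \<rho> (i + k))" using suffix_play[OF pl, of k] k by simp
    have co': "consistent A0 (\<lambda>h. \<pi> (last h)) (\<lambda>i. \<rho> (i + k))"
      unfolding consistent_def
    proof (intro allI impI)
      fix i assume "\<rho> (i + k) \<in> A0"
      then have "\<rho> (Suc (i + k)) = \<sigma>' (prefix \<rho> (i + k))" using co by (simp add: consistent_def)
      moreover have "v \<in> set (prefix \<rho> (i + k))" using k by (auto simp: set_prefix)
      ultimately show "\<rho> (Suc i + k) = \<pi> (last (prefix (\<lambda>i. \<rho> (i + k)) i))"
        by (simp add: \<sigma>'_def)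
    qed
    have "v \<in> S" using vA A0S by auto
    then have "Bounded d (\<lambda>i. \<rho> (i + k))" using IH Wv pl' co' by (auto simp: goodPos_def)
    then show False using Bad_shift[OF bad, of k] not_both by blast
  next
    case False
    have "play Ed s \<rho>" using play_mono[OF _ pl] R by (auto simp: restr_def)
    moreover have "consistent A0 \<sigma> \<rho>"
      using co False by (auto simp: consistent_def \<sigma>'_def set_prefix)
    ultimately have "Bounded d \<rho>" by (rule win)
    then show False using bad not_both by blast
  qed
qed




lemma cat_play2:
  assumes "\<rho> 0 = s" "\<And>i. i < k \<Longrightarrow> (\<rho> i, \<rho> (Suc i)) \<in> Ed" "play Ed (\<rho> k) \<rho>'"
  shows "play Ed s (cat k \<rho> \<rho>')"
  unfolding play_def
proof (intro conjI allI)
  show "cat k \<rho> \<rho>' 0 = s" using assms by (cases k) (auto simp: cat_def play_def)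
next
  fix n
  show "(cat k \<rho> \<rho>' n, cat k \<rho> \<rho>' (Suc n)) \<in> Ed"
  proof (cases "Suc n < k")
    case True then show ?thesis using assms(2)[of n] by (simp add: cat_def)
  next
    case False
    show ?thesis
    proof (cases "Suc n = k")
      case True
      have "(\<rho> n, \<rho> (Suc n)) \<in> Ed" using assms(2)[of n] True by simp
      then show ?thesis using True assms(3) by (simp add: cat_def play_def)
    next
      case F2: False
      then have e: "Suc n - k = Suc (n - k)" "\<not> n < k" "\<not> Suc n < k" using False by auto
      have "(\<rho>' (n - k), \<rho>' (Suc (n - k))) \<in> Ed" using assms(3) by (simp add: play_def)
      then show ?thesis using e by (simp add: cat_def)
    qed
  qed
qed

lemma least_ex:
  assumes "\<exists>n. P (n::nat)" obtains n where "P n" "\<And>m. m < n \<Longrightarrow> \<not> P m"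
  using assms exists_least_iff[of P] by blast

lemma caseC:
  fixes d :: "'a \<Rightarrow> int"
  assumes ar: "arena_ok S Ed" and fin: "finite S" and A0S: "A0 \<subseteq> S"
    and R1: "restr v Ed Ed1" and R2: "restr v Ed Ed2" and vA: "v \<in> A0"
    and ar1: "arena_ok S Ed1" and ar2: "arena_ok S Ed2"
    and \<pi>1v: "\<forall>u\<in>A0. (u, \<pi>1 u) \<in> Ed1"
    and IH1: "\<forall>s\<in>S. W0 A0 d Ed1 [s] \<longrightarrow> goodPos A0 d Ed1 \<pi>1 s"
    and \<pi>2v: "\<forall>u\<in>A0. (u, \<pi>2 u) \<in> Ed2"
    and IH2: "\<forall>s\<in>S. W0 A0 d Ed2 [s] \<longrightarrow> goodPos A0 d Ed2 \<pi>2 s"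
    and nW1: "\<not> W0 A0 d Ed1 [v]" and nW2: "\<not> W0 A0 d Ed2 [v]" and nW: "\<not> W0 A0 d Ed [v]"
  shows "\<forall>s\<in>S. W0 A0 d Ed [s] \<longrightarrow> goodPos A0 d Ed (\<lambda>u. if W0 A0 d Ed1 [u] then \<pi>1 u else \<pi>2 u) s"
proof -
  define \<pi> where "\<pi> u = (if W0 A0 d Ed1 [u] then \<pi>1 u else \<pi>2 u)" for u
  have b1: "goodPos A0 d Ed \<pi> u" if uS: "u \<in> S" and Wu: "W0 A0 d Ed1 [u]" for u
    unfolding goodPos_def
  proof (intro allI impI, elim conjE)
    fix \<rho> assume pl: "play Ed u \<rho>" and co: "consistent A0 (\<lambda>h. \<pi> (last h)) \<rho>"
    have inS: "\<And>n. \<rho> n \<in> S" using play_in_S[OF ar uS pl] .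
    have all: "W0 A0 d Ed1 [\<rho> n]" for n
    proof (rule ccontr)
      assume "\<not> W0 A0 d Ed1 [\<rho> n]"
      then have ex: "\<exists>n. \<not> W0 A0 d Ed1 [\<rho> n]" by blast
      define n where "n = (LEAST n. \<not> W0 A0 d Ed1 [\<rho> n])"
      have n: "\<not> W0 A0 d Ed1 [\<rho> n]" unfolding n_def by (rule LeastI_ex[OF ex])
      have lt: "W0 A0 d Ed1 [\<rho> m]" if "m < n" for m
        using not_less_Least[OF that[unfolded n_def]] by blast
      have \<rho>0: "\<rho> 0 = u" using pl by (simp add: play_def)
      have n0: "0 < n" using n Wu \<rho>0 by (cases n) auto
      have val1: "valid A0 Ed1 (\<lambda>h. \<pi>1 (last h))" using \<pi>1v by (simp add: valid_def)
      obtain \<rho>'' where pl'': "play Ed1 (\<rho> n) \<rho>''" and co'': "consistent A0 (\<lambda>h. \<pi>1 (last h)) \<rho>''"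
        and bad: "Bad (card S) d \<rho>''"
        using L2[OF ar1 fin A0S inS n val1] by blast
      have nv: "\<rho> m \<noteq> v" if "m < n" for m using lt[OF that] nW1 by auto
      have edges: "(\<rho> i, \<rho> (Suc i)) \<in> Ed1" if "i < n" for i
        using pl nv[OF that] R1 by (auto simp: play_def restr_def)
      have plc: "play Ed1 u (cat n \<rho> \<rho>'')" by (rule cat_play2[OF \<rho>0 edges pl''])
      have \<rho>''0: "\<rho>'' 0 = \<rho> n" using pl'' by (simp add: play_def)
      have coc: "consistent A0 (\<lambda>h. \<pi>1 (last h)) (cat n \<rho> \<rho>'')"
      proof (rule cat_consistent[where \<rho>=\<rho> and \<rho>'=\<rho>'' and k=n, OF \<rho>''0 n0])
        fix i assume "i < n" "\<rho> i \<in> A0"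
        then show "\<rho> (Suc i) = \<pi>1 (last (prefix \<rho> i))"
          using co lt[of i] by (simp add: consistent_def \<pi>_def)
      next
        show "consistent A0 (\<lambda>x. \<pi>1 (last (prefix \<rho> (n - 1) @ x))) \<rho>''"
          using co'' by (simp add: consistent_def)
      qed
      have "Bounded d (cat n \<rho> \<rho>'')" using IH1 uS Wu plc coc by (auto simp: goodPos_def)
      then have "Bounded d \<rho>''" using Bounded_suffix[of d "cat n \<rho> \<rho>''" n] by (simp add: cat_shift_fun)
      then show False using bad not_both by blast
    qed
    have "play Ed1 u \<rho>" using play_avoid[OF R1 pl] all nW1 by metis
    moreover have "consistent A0 (\<lambda>h. \<pi>1 (last h)) \<rho>"
      using co all by (simp add: consistent_def \<pi>_def)
    ultimately show "Bounded d \<rho>" using IH1 uS Wu by (auto simp: goodPos_def)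
  qed
  have b2: "goodPos A0 d Ed \<pi> u" if uS: "u \<in> S" and nWu: "\<not> W0 A0 d Ed1 [u]" and Wu: "W0 A0 d Ed2 [u]" for u
    unfolding goodPos_def
  proof (intro allI impI, elim conjE)
    fix \<rho> assume pl: "play Ed u \<rho>" and co: "consistent A0 (\<lambda>h. \<pi> (last h)) \<rho>"
    have inS: "\<And>n. \<rho> n \<in> S" using play_in_S[OF ar uS pl] .
    show "Bounded d \<rho>"
    proof (cases "\<exists>k. W0 A0 d Ed1 [\<rho> k]")
      case True
      then obtain k where k: "W0 A0 d Ed1 [\<rho> k]" by blast
      have "Bounded d (\<lambda>i. \<rho> (i + k))"
        using b1[OF inS k] suffix_play[OF pl, of k] positional_suffix[OF co, of k]
        by (auto simp: goodPos_def)
      then show ?thesis by (rule Bounded_unshift)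
    next
      case False
      have co2: "consistent A0 (\<lambda>h. \<pi>2 (last h)) \<rho>"
        using co False by (simp add: consistent_def \<pi>_def)
      have "play Ed2 u \<rho>" by (rule play_restrict[OF R2 vA _ pl co2]) (use \<pi>2v vA in auto)
      then show ?thesis using IH2 uS Wu co2 by (auto simp: goodPos_def)
    qed
  qed
  have b3: False if uS: "u \<in> S" and nW1u: "\<not> W0 A0 d Ed1 [u]" and nW2u: "\<not> W0 A0 d Ed2 [u]"
    and Wu: "W0 A0 d Ed [u]" for u
  proof -
    have uv: "u \<noteq> v" using Wu nW by auto
    obtain \<sigma> where val: "valid A0 Ed \<sigma>" and win: "\<And>\<rho>. play Ed u \<rho> \<Longrightarrow> consistent A0 \<sigma> \<rho> \<Longrightarrow> Bounded d \<rho>"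
      using L1[OF ar fin A0S uS Wu] by blast
    define \<sigma>' where "\<sigma>' h = (if v \<in> set h then \<pi>1 (last h) else \<sigma> h)" for h
    have val': "valid A0 Ed1 \<sigma>'"
      unfolding valid_def
    proof (intro allI impI)
      fix h :: "'a list" assume h: "h \<noteq> []" "last h \<in> A0"
      show "(last h, \<sigma>' h) \<in> Ed1"
      proof (cases "v \<in> set h")
        case True then show ?thesis using \<pi>1v h by (simp add: \<sigma>'_def)
      next
        case False
        then have "last h \<noteq> v" using h(1) by (metis last_in_set)
        moreover have "(last h, \<sigma> h) \<in> Ed" using val h by (simp add: valid_def)
        ultimately show ?thesis using False R1 by (simp add: \<sigma>'_def restr_def)
      qed
    qed
    obtain \<rho> where pl: "play Ed1 u \<rho>" and co: "consistent A0 \<sigma>' \<rho>" and bad: "Bad (card S) d \<rho>"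
      using L2[OF ar1 fin A0S uS nW1u val'] by blast
    have plE: "play Ed u \<rho>" using play_mono[OF _ pl] R1 by (auto simp: restr_def)
    show False
    proof (cases "\<exists>k. \<rho> k = v")
      case False
      have "consistent A0 \<sigma> \<rho>"
        using co False by (auto simp: consistent_def \<sigma>'_def set_prefix)
      then have "Bounded d \<rho>" using win plE by blast
      then show False using bad not_both by blast
    next
      case True
      define k where "k = (LEAST k. \<rho> k = v)"
      have k: "\<rho> k = v" unfolding k_def by (rule LeastI_ex[OF True])
      have lt: "\<rho> m \<noteq> v" if "m < k" for m
        using not_less_Least[OF that[unfolded k_def]] by blast
      have \<rho>0: "\<rho> 0 = u" using pl by (simp add: play_def)
      have k0: "0 < k" using k \<rho>0 uv by (cases k) auto
      define \<sigma>v where "\<sigma>v x = \<sigma> (prefix \<rho> (k - 1) @ x)" for x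
      have valv: "valid A0 Ed \<sigma>v" unfolding valid_def
      proof (intro allI impI)
        fix h :: "'a list" assume "h \<noteq> []" "last h \<in> A0"
        then show "(last h, \<sigma>v h) \<in> Ed"
          using val[unfolded valid_def, rule_format, of "prefix \<rho> (k - 1) @ h"] by (simp add: \<sigma>v_def)
      qed
      have vS: "v \<in> S" using vA A0S by auto
      obtain \<rho>v where plv: "play Ed v \<rho>v" and cov: "consistent A0 \<sigma>v \<rho>v" and badv: "Bad (card S) d \<rho>v"
        using L2[OF ar fin A0S vS nW valv] by blast
      have \<rho>v0: "\<rho>v 0 = \<rho> k" using plv k by (simp add: play_def)
      have edges: "(\<rho> i, \<rho> (Suc i)) \<in> Ed" if "i < k" for i using plE by (simp add: play_def)
      have plv2: "play Ed (\<rho> k) \<rho>v" using plv k by simp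
      have plc: "play Ed u (cat k \<rho> \<rho>v)" by (rule cat_play2[OF \<rho>0 edges plv2])
      have coc: "consistent A0 \<sigma> (cat k \<rho> \<rho>v)"
      proof (rule cat_consistent[where \<rho>=\<rho> and \<rho>'=\<rho>v and k=k, OF \<rho>v0 k0])
        fix i assume i: "i < k" "\<rho> i \<in> A0"
        have "v \<notin> set (prefix \<rho> i)"
        proof
          assume "v \<in> set (prefix \<rho> i)"
          then obtain x where "x \<le> i" "\<rho> x = v" by (auto simp: set_prefix)
          then show False using lt[of x] i(1) by simp
        qed
        then show "\<rho> (Suc i) = \<sigma> (prefix \<rho> i)" using co i(2) by (simp add: consistent_def \<sigma>'_def)
      next
        show "consistent A0 (\<lambda>x. \<sigma> (prefix \<rho> (k - 1) @ x)) \<rho>v" using cov by (simp add: \<sigma>v_def[abs_def])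
      qed
      have "Bounded d (cat k \<rho> \<rho>v)" by (rule win[OF plc coc])
      then have "Bounded d \<rho>v" using Bounded_suffix[of d "cat k \<rho> \<rho>v" k] by (simp add: cat_shift_fun)
      then show False using badv not_both by blast
    qed
  qed
  show ?thesis
  proof (intro ballI impI)
    fix s assume sS: "s \<in> S" and Ws: "W0 A0 d Ed [s]"
    show "goodPos A0 d Ed (\<lambda>u. if W0 A0 d Ed1 [u] then \<pi>1 u else \<pi>2 u) s"
      using b1[OF sS] b2[OF sS] b3[OF sS _ _ Ws] unfolding \<pi>_def by blast
  qed
qed




lemma main_ind:
  fixes d :: "'a \<Rightarrow> int"
  assumes fin: "finite S" and A0S: "A0 \<subseteq> S"
  shows "arena_ok S Ed \<Longrightarrow> \<exists>\<pi>. (\<forall>u\<in>A0. (u, \<pi> u) \<in> Ed) \<and> (\<forall>s\<in>S. W0 A0 d Ed [s] \<longrightarrow> goodPos A0 d Ed \<pi> s)"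
proof (induction "card (Ed \<inter> (A0 \<times> UNIV))" arbitrary: Ed rule: less_induct)
  case less
  note ar = less.prems
  have finEd: "finite (Ed \<inter> (A0 \<times> UNIV))"
  proof (rule finite_subset)
    show "Ed \<inter> (A0 \<times> UNIV) \<subseteq> S \<times> S" using ar by (auto simp: arena_ok_def)
    show "finite (S \<times> S)" using fin by simp
  qed
  show ?case
  proof (cases "\<exists>v\<in>A0. \<exists>y1 y2. (v, y1) \<in> Ed \<and> (v, y2) \<in> Ed \<and> y1 \<noteq> y2")
    case False
    define \<pi> where "\<pi> u = (SOME y. (u, y) \<in> Ed)" for u
    have \<pi>v: "\<forall>u\<in>A0. (u, \<pi> u) \<in> Ed"
    proof
      fix u assume "u \<in> A0"
      then have "\<exists>y. (u, y) \<in> Ed" using ar A0S by (auto simp: arena_ok_def)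
      then show "(u, \<pi> u) \<in> Ed" unfolding \<pi>_def by (rule someI_ex)
    qed
    have "goodPos A0 d Ed \<pi> s" if sS: "s \<in> S" and Ws: "W0 A0 d Ed [s]" for s
      unfolding goodPos_def
    proof (intro allI impI, elim conjE)
      fix \<rho> assume pl: "play Ed s \<rho>" and co: "consistent A0 (\<lambda>h. \<pi> (last h)) \<rho>"
      obtain \<sigma> where val: "valid A0 Ed \<sigma>" and win: "\<And>\<rho>. play Ed s \<rho> \<Longrightarrow> consistent A0 \<sigma> \<rho> \<Longrightarrow> Bounded d \<rho>"
        using L1[OF ar fin A0S sS Ws] by blast
      have "consistent A0 \<sigma> \<rho>"
        unfolding consistent_def
      proof (intro allI impI)
        fix n assume A: "\<rho> n \<in> A0"
        have e1: "(\<rho> n, \<sigma> (prefix \<rho> n)) \<in> Ed" using val[unfolded valid_def, rule_format, of "prefix \<rho> n"] A by simp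
        have e2: "(\<rho> n, \<pi> (\<rho> n)) \<in> Ed" using \<pi>v A by blast
        have "\<rho> (Suc n) = \<pi> (\<rho> n)" using co A by (simp add: consistent_def)
        also have "\<dots> = \<sigma> (prefix \<rho> n)" using False A e1 e2 by blast
        finally show "\<rho> (Suc n) = \<sigma> (prefix \<rho> n)" .
      qed
      then show "Bounded d \<rho>" using win pl by blast
    qed
    then show ?thesis using \<pi>v by blast
  next
    case True
    then obtain v y1 y2 where vA: "v \<in> A0" and e1: "(v, y1) \<in> Ed" and e2: "(v, y2) \<in> Ed" and ne: "y1 \<noteq> y2"
      by blast
    define Ed1 where "Ed1 = Ed - {(v, y1)}"
    define Ed2 where "Ed2 = Ed - {(v, y) | y. y \<noteq> y1}"
    have R1: "restr v Ed Ed1" by (auto simp: restr_def Ed1_def)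
    have R2: "restr v Ed Ed2" by (auto simp: restr_def Ed2_def)
    have ar1: "arena_ok S Ed1"
      unfolding arena_ok_def
    proof (intro conjI ballI)
      show "Ed1 \<subseteq> S \<times> S" using ar by (auto simp: arena_ok_def Ed1_def)
      fix s assume "s \<in> S"
      then obtain y where y: "(s, y) \<in> Ed" using ar by (auto simp: arena_ok_def)
      show "\<exists>y. (s, y) \<in> Ed1"
      proof (cases "s = v")
        case True then show ?thesis using e2 ne by (intro exI[of _ y2]) (auto simp: Ed1_def)
      next
        case False then show ?thesis using y by (intro exI[of _ y]) (auto simp: Ed1_def)
      qed
    qed
    have ar2: "arena_ok S Ed2"
      using ar e1 unfolding arena_ok_def Ed2_def by auto
    have c1: "card (Ed1 \<inter> (A0 \<times> UNIV)) < card (Ed \<inter> (A0 \<times> UNIV))"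
      by (rule psubset_card_mono[OF finEd]) (use e1 vA in \<open>auto simp: Ed1_def\<close>)
    have c2: "card (Ed2 \<inter> (A0 \<times> UNIV)) < card (Ed \<inter> (A0 \<times> UNIV))"
      by (rule psubset_card_mono[OF finEd]) (use e2 vA ne in \<open>auto simp: Ed2_def\<close>)
    obtain \<pi>1 where \<pi>1v: "\<forall>u\<in>A0. (u, \<pi>1 u) \<in> Ed1" and IH1: "\<forall>s\<in>S. W0 A0 d Ed1 [s] \<longrightarrow> goodPos A0 d Ed1 \<pi>1 s"
      using less.hyps[OF c1 ar1] by blast
    obtain \<pi>2 where \<pi>2v: "\<forall>u\<in>A0. (u, \<pi>2 u) \<in> Ed2" and IH2: "\<forall>s\<in>S. W0 A0 d Ed2 [s] \<longrightarrow> goodPos A0 d Ed2 \<pi>2 s"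
      using less.hyps[OF c2 ar2] by blast
    have sub1: "Ed1 \<subseteq> Ed" and sub2: "Ed2 \<subseteq> Ed" using R1 R2 by (auto simp: restr_def)
    have caseAB: "\<exists>\<pi>. (\<forall>u\<in>A0. (u, \<pi> u) \<in> Ed) \<and> (\<forall>s\<in>S. W0 A0 d Ed [s] \<longrightarrow> goodPos A0 d Ed \<pi> s)"
      if Ri: "restr v Ed Edi" and ari: "arena_ok S Edi" and \<pi>iv: "\<forall>u\<in>A0. (u, \<pi>i u) \<in> Edi"
        and IHi: "\<forall>s\<in>S. W0 A0 d Edi [s] \<longrightarrow> goodPos A0 d Edi \<pi>i s" and Wv: "W0 A0 d Edi [v]" for Edi \<pi>i
    proof (intro exI conjI)
      show "\<forall>u\<in>A0. (u, \<pi>i u) \<in> Ed" using \<pi>iv Ri by (auto simp: restr_def)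
      show "\<forall>s\<in>S. W0 A0 d Ed [s] \<longrightarrow> goodPos A0 d Ed \<pi>i s"
      proof (intro ballI impI)
        fix s assume sS: "s \<in> S" and Ws: "W0 A0 d Ed [s]"
        have "W0 A0 d Edi [s]" by (rule caseA[OF ar fin A0S Ri vA ari \<pi>iv IHi Wv sS Ws])
        then have gp: "goodPos A0 d Edi \<pi>i s" using IHi sS by blast
        show "goodPos A0 d Ed \<pi>i s"
          unfolding goodPos_def
        proof (intro allI impI, elim conjE)
          fix \<rho> assume pl: "play Ed s \<rho>" and co: "consistent A0 (\<lambda>h. \<pi>i (last h)) \<rho>"
          have "play Edi s \<rho>" by (rule play_restrict[OF Ri vA _ pl co]) (use \<pi>iv vA in blast)
          then show "Bounded d \<rho>" using gp co by (simp add: goodPos_def)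
        qed
      qed
    qed
    show ?thesis
    proof (cases "W0 A0 d Ed1 [v]")
      case True then show ?thesis using caseAB[OF R1 ar1 \<pi>1v IH1] by blast
    next
      case F1: False
      show ?thesis
      proof (cases "W0 A0 d Ed2 [v]")
        case True then show ?thesis using caseAB[OF R2 ar2 \<pi>2v IH2] by blast
      next
        case F2: False
        have cover: "(v, y) \<in> Ed1 \<or> (v, y) \<in> Ed2" if "(v, y) \<in> Ed" for y
          using that by (auto simp: Ed1_def Ed2_def)
        have nW: "\<not> W0 A0 d Ed [v]" using W0_split[OF vA _ R1 R2 cover] F1 F2 by blast
        have "\<forall>u\<in>A0. (u, (if W0 A0 d Ed1 [u] then \<pi>1 u else \<pi>2 u)) \<in> Ed"
          using \<pi>1v \<pi>2v sub1 sub2 by auto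
        moreover have "\<forall>s\<in>S. W0 A0 d Ed [s] \<longrightarrow> goodPos A0 d Ed (\<lambda>u. if W0 A0 d Ed1 [u] then \<pi>1 u else \<pi>2 u) s"
          by (rule caseC[OF ar fin A0S R1 R2 vA ar1 ar2 \<pi>1v IH1 \<pi>2v IH2 F1 F2 nW])
        ultimately show ?thesis by (intro exI[of _ "\<lambda>u. if W0 A0 d Ed1 [u] then \<pi>1 u else \<pi>2 u"]) simp
      qed
    qed
  qed
qed

theorem MAIN:
  fixes d :: "'a \<Rightarrow> int"
  assumes fin: "finite S" and A0S: "A0 \<subseteq> S" and ar: "arena_ok S Ed" and sS: "s \<in> S"
    and val: "valid A0 Ed \<sigma>" and win: "\<And>\<rho>. play Ed s \<rho> \<Longrightarrow> consistent A0 \<sigma> \<rho> \<Longrightarrow> \<not> Bad (card S) d \<rho>"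
  shows "\<exists>\<pi>. (\<forall>u\<in>A0. (u, \<pi> u) \<in> Ed) \<and> goodPos A0 d Ed \<pi> s"
proof -
  obtain \<pi> where \<pi>v: "\<forall>u\<in>A0. (u, \<pi> u) \<in> Ed" and gp: "\<forall>s\<in>S. W0 A0 d Ed [s] \<longrightarrow> goodPos A0 d Ed \<pi> s"
    using main_ind[OF fin A0S ar] by blast
  have "W0 A0 d Ed [s]"
  proof (rule ccontr)
    assume "\<not> W0 A0 d Ed [s]"
    then obtain \<rho> where "play Ed s \<rho>" "consistent A0 \<sigma> \<rho>" "Bad (card S) d \<rho>"
      using L2[OF ar fin A0S sS _ val] by blast
    then show False using win by blast
  qed
  then show ?thesis using \<pi>v gp sS by blast
qed




lemma edges_single[simp]: "edges [x] = []" by (simp add: edges_def)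

lemma edges_Cons2[simp]: "edges (a # b # zs) = (a, b) # edges (b # zs)" by (simp add: edges_def)

lemma edges_snoc: "zs \<noteq> [] \<Longrightarrow> edges (zs @ [y]) = edges zs @ [(last zs, y)]"
proof (induction zs)
  case Nil then show ?case by simp
next
  case (Cons a zs)
  then show ?case by (cases zs) auto
qed

lemma edges_Nil[simp]: "edges [] = []" by (simp add: edges_def)

lemma no_recharge_snoc: "zs \<noteq> [] \<Longrightarrow> no_recharge w (zs @ [y]) \<longleftrightarrow> no_recharge w zs \<and> w (last zs, y) \<noteq> Rch"
  by (auto simp: no_recharge_def edges_snoc)

lemma EL_snoc: "zs \<noteq> [] \<Longrightarrow> w (last zs, y) = Wt k \<Longrightarrow> EL w (zs @ [y]) = EL w zs + k"
  by (simp add: EL_def edges_snoc)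

lemma no_recharge_short: "length zs \<le> 1 \<Longrightarrow> no_recharge w zs"
  by (cases zs) (auto simp: no_recharge_def edges_def)

lemma EL_cap_single: "EL_cap w cap [x] = int cap"
proof -
  have "(LEAST k. no_recharge w (drop k [x])) = 0"
    by (rule Least_equality) (auto simp: no_recharge_short)
  then show ?thesis by (simp add: EL_cap_def EL_def)
qed

lemma EL_cap_snoc:
  assumes ne: "xs \<noteq> []"
  shows "EL_cap w cap (xs @ [y]) = (case w (last xs, y) of Rch \<Rightarrow> int cap | Wt k \<Rightarrow> EL_cap w cap xs + k)"
proof (cases "w (last xs, y)")
  case Rch
  have L: "(LEAST k. no_recharge w (drop k (xs @ [y]))) = length xs"
  proof (rule Least_equality)
    show "no_recharge w (drop (length xs) (xs @ [y]))" by (simp add: no_recharge_short)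
  next
    fix k assume nr: "no_recharge w (drop k (xs @ [y]))"
    show "length xs \<le> k"
    proof (rule ccontr)
      assume "\<not> length xs \<le> k"
      then have "drop k (xs @ [y]) = drop k xs @ [y]" "drop k xs \<noteq> []" "last (drop k xs) = last xs" by auto
      then show False using nr Rch no_recharge_snoc[of "drop k xs" w y] by simp
    qed
  qed
  have "EL_cap w cap (xs @ [y]) = int cap + EL w (drop (length xs) (xs @ [y]))" unfolding EL_cap_def L ..
  then show ?thesis using Rch by (simp add: EL_def)
next
  case (Wt k0)
  have P: "no_recharge w (drop k (xs @ [y])) \<longleftrightarrow> no_recharge w (drop k xs)" for k
  proof (cases "k < length xs")
    case True
    then have "drop k (xs @ [y]) = drop k xs @ [y]" "drop k xs \<noteq> []" "last (drop k xs) = last xs" by auto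
    then show ?thesis using Wt no_recharge_snoc[of "drop k xs" w y] by simp
  next
    case False
    then show ?thesis by (simp add: no_recharge_short)
  qed
  define L where "L = (LEAST k. no_recharge w (drop k xs))"
  have L': "(LEAST k. no_recharge w (drop k (xs @ [y]))) = L" unfolding L_def P ..
  have "L \<le> length xs - 1" unfolding L_def by (rule Least_le) (simp add: no_recharge_short)
  then have Llt: "L < length xs" using ne by (cases xs) auto
  then have "drop L (xs @ [y]) = drop L xs @ [y]" "drop L xs \<noteq> []" "last (drop L xs) = last xs" by auto
  then have "EL w (drop L (xs @ [y])) = EL w (drop L xs) + k0" using EL_snoc[of "drop L xs" w y k0] Wt by simp
  moreover have "EL_cap w cap (xs @ [y]) = int cap + EL w (drop L (xs @ [y]))" unfolding EL_cap_def L' ..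
  moreover have "EL_cap w cap xs = int cap + EL w (drop L xs)" unfolding EL_cap_def L_def ..
  ultimately show ?thesis using Wt by simp
qed

lemma EL_cap_prefix0: "EL_cap w cap (prefix \<rho> 0) = int cap"
  by (simp add: EL_cap_single)

lemma EL_cap_prefixS: "EL_cap w cap (prefix \<rho> n @ [\<rho> (Suc n)]) =
   (case w (\<rho> n, \<rho> (Suc n)) of Rch \<Rightarrow> int cap | Wt k \<Rightarrow> EL_cap w cap (prefix \<rho> n) + k)"
  using EL_cap_snoc[of "prefix \<rho> n" w cap "\<rho> (Suc n)"] by simp

definition UpdR :: "('v \<times> 'v \<Rightarrow> rweight) \<Rightarrow> nat \<Rightarrow> nat \<Rightarrow> 'v \<times> 'v \<Rightarrow> nat" where
  "UpdR w cap m e = (if cap < m then Suc cap else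
      (case w e of Rch \<Rightarrow> cap | Wt k \<Rightarrow> if 0 \<le> int m + k \<and> int m + k \<le> int cap then nat (int m + k) else Suc cap))"

lemma UpdR_le: "UpdR w cap m e \<le> Suc cap"
  by (auto simp: UpdR_def split: rweight.splits)

lemma mem_rel:
  assumes rw: "recharge_weight E w" and pl: "\<And>n. (\<rho> n, \<rho> (Suc n)) \<in> E"
    and m0: "mem 0 = cap" and mS: "\<And>n. mem (Suc n) = UpdR w cap (mem n) (\<rho> n, \<rho> (Suc n))"
  shows "(mem n \<le> cap \<longrightarrow> int (mem n) = EL_cap w cap (prefix \<rho> n)) \<and>
         (mem n \<le> cap \<longrightarrow> (\<forall>j\<le>n. EL_cap w cap (prefix \<rho> j) \<ge> 0)) \<and>
         (cap < mem n \<longrightarrow> (\<exists>j\<le>n. EL_cap w cap (prefix \<rho> j) < 0))"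
proof (induction n)
  case 0 then show ?case using m0 by (simp add: EL_cap_single)
next
  case (Suc n)
  show ?case
  proof (cases "cap < mem n")
    case True
    then have "cap < mem (Suc n)" using mS by (simp add: UpdR_def)
    then show ?thesis using Suc True by (auto intro: le_SucI)
  next
    case False
    then have IH: "int (mem n) = EL_cap w cap (prefix \<rho> n)" "\<forall>j\<le>n. EL_cap w cap (prefix \<rho> j) \<ge> 0"
      using Suc by auto
    have allS: "(\<forall>j\<le>Suc n. EL_cap w cap (prefix \<rho> j) \<ge> 0) \<longleftrightarrow> EL_cap w cap (prefix \<rho> (Suc n)) \<ge> 0"
      using IH(2) le_Suc_eq by auto
    show ?thesis
    proof (cases "w (\<rho> n, \<rho> (Suc n))")
      case Rch
      then show ?thesis using mS[of n] False allS by (simp add: UpdR_def EL_cap_prefixS)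
    next
      case (Wt k)
      have k0: "k \<le> 0" using rw pl[of n] Wt by (auto simp: recharge_weight_def)
      have E: "EL_cap w cap (prefix \<rho> (Suc n)) = int (mem n) + k" using Wt IH(1) by (simp add: EL_cap_prefixS)
      show ?thesis
      proof (cases "0 \<le> int (mem n) + k")
        case True
        then have "mem (Suc n) = nat (int (mem n) + k)" using mS[of n] False Wt k0 by (simp add: UpdR_def)
        then show ?thesis using E True allS k0 False by auto
      next
        case F2: False
        then have "mem (Suc n) = Suc cap" using mS[of n] False Wt by (simp add: UpdR_def)
        then show ?thesis using E F2 by (auto intro!: exI[of _ "Suc n"])
      qed
    qed
  qed
qed

lemma limsup_upper:
  fixes f :: "nat \<Rightarrow> real"
  assumes "\<And>n. (\<Sum>i<n. f i) \<le> real n * t + K"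
  shows "limsup (\<lambda>n. ereal ((\<Sum>i<n. f i) / real n)) \<le> ereal t"
proof -
  define K' where "K' = max K 0"
  have ev: "eventually (\<lambda>n. ereal ((\<Sum>i<n. f i) / real n) \<le> ereal (t + K' / real n)) sequentially"
    using eventually_ge_at_top[of "1::nat"]
  proof eventually_elim
    case (elim n)
    then have n: "real n > 0" by simp
    have "(\<Sum>i<n. f i) \<le> real n * t + K'" using assms[of n] unfolding K'_def by linarith
    then have "(\<Sum>i<n. f i) / real n \<le> (real n * t + K') / real n" using n by (simp add: divide_right_mono)
    also have "\<dots> = t + K' / real n" using n by (simp add: field_simps)
    finally show ?case by simp
  qed
  have lim: "(\<lambda>n. ereal (t + K' / real n)) \<longlonglongrightarrow> ereal t"
  proof (rule tendsto_ereal)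
    have "(\<lambda>n. K' / real n) \<longlonglongrightarrow> 0" by (rule lim_const_over_n)
    then show "(\<lambda>n. t + K' / real n) \<longlonglongrightarrow> t" using tendsto_add[of "\<lambda>_. t" t sequentially] by fastforce
  qed
  have "limsup (\<lambda>n. ereal ((\<Sum>i<n. f i) / real n)) \<le> limsup (\<lambda>n. ereal (t + K' / real n))"
    by (rule Limsup_mono[OF ev])
  also have "\<dots> = ereal t" by (rule lim_imp_Limsup[OF _ lim]) simp
  finally show ?thesis .
qed

lemma limsup_lower:
  fixes f :: "nat \<Rightarrow> real"
  assumes N: "N > 0" and b: "\<And>n. real n \<le> N * ((\<Sum>i<n. f i) - real n * t) + K"
  shows "ereal t < limsup (\<lambda>n. ereal ((\<Sum>i<n. f i) / real n))"
proof -
  have ev: "eventually (\<lambda>n. ereal (t + 1 / (2 * N)) \<le> ereal ((\<Sum>i<n. f i) / real n)) sequentially"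
    using eventually_ge_at_top[of "nat (ceiling (2 * \<bar>K\<bar>)) + 1"]
  proof eventually_elim
    case (elim n)
    then have n1: "real n \<ge> 2 * \<bar>K\<bar> + 1"
      by (smt (verit, ccfv_SIG) of_nat_1 of_nat_add of_nat_ceiling of_nat_mono)
    then have n: "real n > 0" by linarith
    have "real n - K \<le> N * ((\<Sum>i<n. f i) - real n * t)" using b[of n] by linarith
    moreover have "real n / 2 \<le> real n - K" using n1 by linarith
    ultimately have "real n / 2 \<le> N * ((\<Sum>i<n. f i) - real n * t)" by linarith
    then have "real n / (2 * N) \<le> (\<Sum>i<n. f i) - real n * t" using N by (simp add: field_simps)
    then have "real n * (t + 1 / (2 * N)) \<le> (\<Sum>i<n. f i)" by (simp add: algebra_simps)
    then have "t + 1 / (2 * N) \<le> (\<Sum>i<n. f i) / real n" using n by (simp add: field_simps mult.commute)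
    then show ?case by simp
  qed
  have "ereal (t + 1 / (2 * N)) \<le> limsup (\<lambda>n. ereal ((\<Sum>i<n. f i) / real n))"
    by (rule le_Limsup[OF _ ev]) simp
  moreover have "ereal t < ereal (t + 1 / (2 * N))" using N by simp
  ultimately show ?thesis by order
qed




lemma foldl_UpdR_le: "m \<le> Suc cap \<Longrightarrow> foldl (UpdR w cap) m es \<le> Suc cap"
  by (induction es arbitrary: m) (auto simp: UpdR_le)

lemma upd_plus_prefix0: "upd_plus mI U (prefix \<rho> 0) = mI"
  by (simp add: upd_plus_def)

lemma upd_plus_prefixS: "upd_plus mI U (prefix \<rho> (Suc n)) = U (upd_plus mI U (prefix \<rho> n)) (\<rho> n, \<rho> (Suc n))"
  by (simp add: upd_plus_def edges_snoc)

theorem corollary1: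
  fixes V V0 :: "'v set" and E :: "('v \<times> 'v) set" and vI :: 'v
    and w :: "'v \<times> 'v \<Rightarrow> rweight" and cap t :: nat
  assumes "arena V V0 E vI"
    and "recharge_weight E w"
    and "wins V V0 E vI (AvgRecharge w cap t)"
  shows "\<exists>(M :: nat set) mI Upd Nxt.
           memory_structure E M mI Upd \<and> card M = cap + 2 \<and> next_move V0 E M Nxt \<and>
           wins_with V V0 E vI (AvgRecharge w cap t) (induced_strategy mI Upd Nxt)"
proof -
  note rw = assms(2)
  have finV: "finite V" and V0V: "V0 \<subseteq> V" and EV: "E \<subseteq> V \<times> V" and vIV: "vI \<in> V"
    and tot: "\<And>v. v \<in> V \<Longrightarrow> \<exists>v'. (v, v') \<in> E"
    using assms(1) by (auto simp: arena_def)
  obtain \<sigma> where strat: "strategy V V0 E \<sigma>"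
    and winp: "\<And>\<rho>. play E vI \<rho> \<Longrightarrow> consistent V0 \<sigma> \<rho> \<Longrightarrow> \<rho> \<in> AvgRecharge w cap t"
    using assms(3) by (auto simp: wins_def wins_with_def)
  define M :: "nat set" where "M = {0..Suc cap}"
  define U where "U = UpdR w cap"
  define S where "S = V \<times> M"
  define A0 where "A0 = V0 \<times> M"
  define Ed where "Ed = {((u, m), (u', U m (u, u'))) | u m u'. (u, u') \<in> E \<and> m \<in> M}"
  define d where "d p = (if snd p \<le> cap then int (snd p) - int t else 1)" for p :: "'v \<times> nat"
  have UM: "U m e \<in> M" for m e using UpdR_le[of w cap m e] by (simp add: U_def M_def)
  have EdD: "((u, m), (u', m')) \<in> Ed \<longleftrightarrow> (u, u') \<in> E \<and> m \<in> M \<and> m' = U m (u, u')" for u m u' m'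
    by (auto simp: Ed_def)
  have finS: "finite S" using finV by (simp add: S_def M_def)
  have A0S: "A0 \<subseteq> S" using V0V by (auto simp: S_def A0_def)
  have arS: "arena_ok S Ed"
    unfolding arena_ok_def
  proof (intro conjI ballI)
    show "Ed \<subseteq> S \<times> S" using EV UM by (auto simp: Ed_def S_def)
  next
    fix p assume "p \<in> S"
    then obtain u m where p: "p = (u, m)" "u \<in> V" "m \<in> M" by (auto simp: S_def)
    then obtain u' where "(u, u') \<in> E" using tot by blast
    then show "\<exists>y. (p, y) \<in> Ed" using p EdD by blast
  qed
  have cM: "cap \<in> M" by (simp add: M_def)
  have s0S: "(vI, cap) \<in> S" using vIV cM by (simp add: S_def)
  have Ecap: "\<And>n. cap < m \<Longrightarrow> U m e = Suc cap" for m e by (simp add: U_def UpdR_def)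
  define \<sigma>P where "\<sigma>P h = (if set (map fst h) \<subseteq> V then (\<sigma> (map fst h), U (snd (last h)) (fst (last h), \<sigma> (map fst h)))
                         else (SOME y. (last h, y) \<in> Ed))" for h
  have valP: "valid A0 Ed \<sigma>P"
    unfolding valid_def
  proof (intro allI impI)
    fix h :: "('v \<times> nat) list" assume h: "h \<noteq> []" "last h \<in> A0"
    show "(last h, \<sigma>P h) \<in> Ed"
    proof (cases "set (map fst h) \<subseteq> V")
      case True
      have "last (map fst h) = fst (last h)" using h(1) by (simp add: last_map)
      then have "(fst (last h), \<sigma> (map fst h)) \<in> E"
        using strat True h by (auto simp: strategy_def A0_def)
      moreover have "snd (last h) \<in> M" using h(2) by (auto simp: A0_def)
      ultimately show ?thesis using True EdD[of "fst (last h)" "snd (last h)"] by (simp add: \<sigma>P_def)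
    next
      case False
      have ex: "\<exists>y. (last h, y) \<in> Ed" using arS h(2) A0S by (auto simp: arena_ok_def)
      show ?thesis unfolding \<sigma>P_def if_not_P[OF False] by (rule someI_ex[OF ex])
    qed
  qed
  have N0: "0 < card S" using finS s0S by (auto simp: card_gt_0_iff)
  have notBad: "\<not> Bad (card S) d \<rho>P" if pl: "play Ed (vI, cap) \<rho>P" and co: "consistent A0 \<sigma>P \<rho>P" for \<rho>P
  proof
    assume bad: "Bad (card S) d \<rho>P"
    define \<rho> where "\<rho> n = fst (\<rho>P n)" for n
    define mem where "mem n = snd (\<rho>P n)" for n
    have inS: "\<rho>P n \<in> S" for n using play_in_S[OF arS s0S pl] .
    have \<rho>Pn: "\<rho>P n = (\<rho> n, mem n)" for n by (simp add: \<rho>_def mem_def)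
    have edge: "(\<rho> n, \<rho> (Suc n)) \<in> E \<and> mem (Suc n) = U (mem n) (\<rho> n, \<rho> (Suc n))" for n
    proof -
      have "(\<rho>P n, \<rho>P (Suc n)) \<in> Ed" using pl by (simp add: play_def)
      then have "((\<rho> n, mem n), (\<rho> (Suc n), mem (Suc n))) \<in> Ed" using \<rho>Pn[of n] \<rho>Pn[of "Suc n"] by simp
      then show ?thesis using EdD by blast
    qed
    have st0: "\<rho>P 0 = (vI, cap)" using pl by (simp add: play_def)
    have pl\<rho>: "play E vI \<rho>" using st0 edge by (simp add: play_def \<rho>_def)
    have pre: "prefix \<rho> n = map fst (prefix \<rho>P n)" for n by (simp add: prefix_def \<rho>_def)
    have co\<rho>: "consistent V0 \<sigma> \<rho>"
      unfolding consistent_def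
    proof (intro allI impI)
      fix n assume "\<rho> n \<in> V0"
      then have "\<rho>P n \<in> A0" using inS[of n] \<rho>Pn[of n] by (auto simp: A0_def S_def)
      then have "\<rho>P (Suc n) = \<sigma>P (prefix \<rho>P n)" using co by (simp add: consistent_def)
      moreover have "set (map fst (prefix \<rho>P n)) \<subseteq> V"
      proof
        fix x assume "x \<in> set (map fst (prefix \<rho>P n))"
        then obtain i where "x = fst (\<rho>P i)" by (auto simp: set_prefix)
        then show "x \<in> V" using inS[of i] by (auto simp: S_def mem_Times_iff)
      qed
      ultimately show "\<rho> (Suc n) = \<sigma> (prefix \<rho> n)" by (simp add: \<sigma>P_def \<rho>_def pre)
    qed
    have inA: "\<rho> \<in> AvgRecharge w cap t" by (rule winp[OF pl\<rho> co\<rho>])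
    have m0: "mem 0 = cap" using st0 by (simp add: mem_def)
    have rel: "(mem n \<le> cap \<longrightarrow> int (mem n) = EL_cap w cap (prefix \<rho> n)) \<and>
         (mem n \<le> cap \<longrightarrow> (\<forall>j\<le>n. EL_cap w cap (prefix \<rho> j) \<ge> 0)) \<and>
         (cap < mem n \<longrightarrow> (\<exists>j\<le>n. EL_cap w cap (prefix \<rho> j) < 0))" for n
      by (rule mem_rel[OF rw]) (use edge m0 in \<open>auto simp: U_def\<close>)
    have nonneg: "EL_cap w cap (prefix \<rho> n) \<ge> 0" for n using inA by (auto simp: AvgRecharge_def Recharge_def)
    have memle: "mem n \<le> cap" for n using rel[of n] nonneg by (meson not_le)
    have dE: "d (\<rho>P i) = EL_cap w cap (prefix \<rho> i) - int t" for i
      using rel[of i] memle[of i] by (simp add: d_def \<rho>Pn)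
    obtain K where K: "\<And>n. int n \<le> int (card S) * (\<Sum>i<n. d (\<rho>P i)) + K" using bad unfolding Bad_def by blast
    define f where "f i = real_of_int (EL_cap w cap (prefix \<rho> i))" for i
    have "real n \<le> real (card S) * ((\<Sum>i<n. f i) - real n * real t) + real_of_int K" for n
    proof -
      have "(\<Sum>i<n. d (\<rho>P i)) = (\<Sum>i<n. EL_cap w cap (prefix \<rho> i)) - int n * int t"
        by (simp add: dE sum_subtractf)
      then have "real_of_int (\<Sum>i<n. d (\<rho>P i)) = (\<Sum>i<n. f i) - real n * real t"
        by (simp add: f_def)
      moreover have "real_of_int (int n) \<le> real_of_int (int (card S) * (\<Sum>i<n. d (\<rho>P i)) + K)"
        using K[of n] by linarith
      ultimately show ?thesis by simp
    qed
    then have "ereal (real t) < limsup (\<lambda>n. ereal ((\<Sum>i<n. f i) / real n))"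
      by (intro limsup_lower[where N = "real (card S)" and K = "real_of_int K"]) (use N0 in auto)
    moreover have "limsup (\<lambda>n. ereal ((\<Sum>i<n. f i) / real n)) \<le> ereal (real t)"
      using inA by (simp add: AvgRecharge_def f_def)
    ultimately show False by simp
  qed
  obtain \<pi> where \<pi>v: "\<forall>u\<in>A0. (u, \<pi> u) \<in> Ed" and gp: "goodPos A0 d Ed \<pi> (vI, cap)"
    using MAIN[OF finS A0S arS s0S valP notBad] by blast
  define Nxt where "Nxt u m = (if u \<in> V0 \<and> m \<in> M then fst (\<pi> (u, m)) else (SOME u'. (u, u') \<in> E))" for u m
  have \<pi>form: "(u, fst (\<pi> (u, m))) \<in> E \<and> \<pi> (u, m) = (fst (\<pi> (u, m)), U m (u, fst (\<pi> (u, m))))"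
    if "u \<in> V0" "m \<in> M" for u m
  proof -
    have "((u, m), \<pi> (u, m)) \<in> Ed" using \<pi>v that by (auto simp: A0_def)
    then show ?thesis using EdD[of u m "fst (\<pi> (u, m))" "snd (\<pi> (u, m))"] by (metis prod.collapse)
  qed
  have nm: "next_move V0 E M Nxt" using \<pi>form by (simp add: next_move_def Nxt_def)
  have ms: "memory_structure E M cap U" using UM cM by (simp add: memory_structure_def M_def)
  have cardM: "card M = cap + 2" by (simp add: M_def)
  have upM: "upd_plus cap U xs \<in> M" for xs
    using foldl_UpdR_le[of cap cap w "edges xs"] by (simp add: upd_plus_def U_def M_def)
  have stratI: "strategy V V0 E (induced_strategy cap U Nxt)"
    unfolding strategy_def
  proof (intro allI impI)
    fix xs :: "'v list" assume h: "xs \<noteq> [] \<and> set xs \<subseteq> V \<and> last xs \<in> V0"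
    then show "(last xs, induced_strategy cap U Nxt xs) \<in> E"
      using nm upM[of xs] by (simp add: induced_strategy_def next_move_def)
  qed
  have winI: "\<rho> \<in> AvgRecharge w cap t" if pl: "play E vI \<rho>" and co: "consistent V0 (induced_strategy cap U Nxt) \<rho>" for \<rho>
  proof -
    define mem where "mem n = upd_plus cap U (prefix \<rho> n)" for n
    have m0: "mem 0 = cap" by (simp add: mem_def upd_plus_def)
    have mS: "mem (Suc n) = U (mem n) (\<rho> n, \<rho> (Suc n))" for n
      unfolding mem_def by (rule upd_plus_prefixS)
    have memM: "mem n \<in> M" for n by (simp add: mem_def upM)
    have edge: "(\<rho> n, \<rho> (Suc n)) \<in> E" for n using pl by (simp add: play_def)
    define \<rho>P where "\<rho>P n = (\<rho> n, mem n)" for n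
    have plP: "play Ed (vI, cap) \<rho>P"
      using pl m0 edge memM mS EdD by (simp add: play_def \<rho>P_def)
    have coP: "consistent A0 (\<lambda>h. \<pi> (last h)) \<rho>P"
      unfolding consistent_def
    proof (intro allI impI)
      fix n assume "\<rho>P n \<in> A0"
      then have a: "\<rho> n \<in> V0" "mem n \<in> M" by (auto simp: A0_def \<rho>P_def)
      have "\<rho> (Suc n) = induced_strategy cap U Nxt (prefix \<rho> n)" using co a by (simp add: consistent_def)
      also have "\<dots> = fst (\<pi> (\<rho> n, mem n))" using a by (simp add: induced_strategy_def Nxt_def mem_def)
      finally have r: "\<rho> (Suc n) = fst (\<pi> (\<rho> n, mem n))" .
      have "\<pi> (\<rho>P n) = (\<rho> (Suc n), mem (Suc n))" using \<pi>form[OF a] r mS[of n] by (simp add: \<rho>P_def)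
      then show "\<rho>P (Suc n) = \<pi> (last (prefix \<rho>P n))" by (simp add: \<rho>P_def)
    qed
    have bd: "Bounded d \<rho>P" using gp plP coP by (simp add: goodPos_def)
    then obtain K where K: "\<And>n. (\<Sum>i<n. d (\<rho>P i)) \<le> K" unfolding Bounded_def by blast
    have memle: "mem n \<le> cap" for n
    proof (rule ccontr)
      assume "\<not> mem n \<le> cap"
      then have big: "cap < mem (n + j)" for j
      proof (induction j)
        case 0 then show ?case by simp
      next
        case (Suc j)
        then have "mem (Suc (n + j)) = Suc cap" using mS[of "n + j"] Ecap by simp
        then show ?case by simp
      qed
      have d1: "d (\<rho>P (i + n)) = 1" for i using big[of i] by (simp add: d_def \<rho>P_def add.commute)
      define j where "j = Suc (nat (K - (\<Sum>i<n. d (\<rho>P i))))"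
      have "(\<Sum>i<j + n. d (\<rho>P i)) = (\<Sum>i<n. d (\<rho>P i)) + (\<Sum>i<j. d (\<rho>P (i + n)))" by (rule sum_shift)
      also have "\<dots> = (\<Sum>i<n. d (\<rho>P i)) + int j" by (simp add: d1)
      finally have "(\<Sum>i<n. d (\<rho>P i)) + int j \<le> K" using K[of "j + n"] by simp
      then show False unfolding j_def by linarith
    qed
    have rel: "(mem n \<le> cap \<longrightarrow> int (mem n) = EL_cap w cap (prefix \<rho> n)) \<and>
         (mem n \<le> cap \<longrightarrow> (\<forall>j\<le>n. EL_cap w cap (prefix \<rho> j) \<ge> 0)) \<and>
         (cap < mem n \<longrightarrow> (\<exists>j\<le>n. EL_cap w cap (prefix \<rho> j) < 0))" for n
      by (rule mem_rel[where \<rho>=\<rho> and mem=mem, OF rw edge m0]) (simp add: mS U_def)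
    have rech: "\<rho> \<in> Recharge w cap" using rel memle by (auto simp: Recharge_def)
    have dE: "d (\<rho>P i) = EL_cap w cap (prefix \<rho> i) - int t" for i
      using rel[of i] memle[of i] by (simp add: d_def \<rho>P_def)
    define f where "f i = real_of_int (EL_cap w cap (prefix \<rho> i))" for i
    have "(\<Sum>i<n. f i) \<le> real n * real t + real_of_int K" for n
    proof -
      have "(\<Sum>i<n. d (\<rho>P i)) = (\<Sum>i<n. EL_cap w cap (prefix \<rho> i)) - int n * int t"
        by (simp add: dE sum_subtractf)
      then have "real_of_int (\<Sum>i<n. d (\<rho>P i)) = (\<Sum>i<n. f i) - real n * real t"
        by (simp add: f_def)
      moreover have "real_of_int (\<Sum>i<n. d (\<rho>P i)) \<le> real_of_int K" using K[of n] by linarith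
      ultimately show ?thesis by simp
    qed
    then have "limsup (\<lambda>n. ereal ((\<Sum>i<n. f i) / real n)) \<le> ereal (real t)"
      by (rule limsup_upper)
    then show ?thesis using rech by (simp add: AvgRecharge_def f_def)
  qed
  have "wins_with V V0 E vI (AvgRecharge w cap t) (induced_strategy cap U Nxt)"
    using stratI winI by (simp add: wins_with_def)
  then show ?thesis using ms cardM nm by blast
qed


end
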